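(* (i) Standard representations of $\mathcal{W}_N$ are irreducible and cyclic, and two standard representations $\rho,\mu$ are equivalent if and only if $a_\rho^{2N}=a_\mu^{2N}$ and $a_\rho^Ny_\rho^N=a_\mu^Ny_\mu^N$. (ii) Every irreducible cyclic representation of $\mathcal{W}_N$ is equivalent to a standard representation. (iii) Fix a determination $u\mapsto u^{1/N}$ of the $N$-th root. Let $\rho,\mu$ be irreducible cyclic representations such that $\rho\otimes\mu$ is cyclic, and let $\rho$ (resp. $\mu$) be equivalent to the standard representation with parameters $(a_\rho,y_\rho)$ (resp. $(a_\mu,y_\mu)$). Then $\rho\otimes\mu$ splits as a direct sum of $N$ representations, each equivalent to the standard representation $\rho\mu$ with parameters $$a_{\rho\mu}=a_\rho a_\mu,\qquad y_{\rho\mu}=\Big(a_\rho^Ny_\mu^N+\frac{y_\rho^N}{a_\mu^N}\Big)^{1/N}.$$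
   Context: $N\ge3$ odd, $\omega=e^{2\pi i/N}$. $\mathcal{W}_N$ is the unital $\mathbb{C}$-algebra generated by $E,E^{-1},D$ with $EE^{-1}=E^{-1}E=1$, $ED=\omega DE$; it is a Hopf algebra with $\Delta(E)=E\otimes E$, $\Delta(D)=E\otimes D+D\otimes 1$, $\epsilon(E)=1$, $\epsilon(D)=0$, $S(E)=E^{-1}$, $S(D)=-E^{-1}D$, and the tensor product of representations is $(\rho\otimes\mu)(a)=(\rho\otimes\mu)(\Delta(a))$. A representation is cyclic if $E$ and $D$ act invertibly. Let $X,Z$ be the $N\times N$ matrices (indices in $\mathbb{Z}/N$) with $X_{ij}=1$ if $i\equiv j+1$ and $0$ otherwise, $Z_{ij}=\omega^i$ if $i\equiv j$ and $0$ otherwise. For $a_\rho,y_\rho\in\mathbb{C}^*$, the standard representation $\rho$ with parameters $(a_\rho,y_\rho)$ is given on $\mathbb{C}^N$ by $\rho(E)=a_\rho^2Z$, $\rho(D)=a_\rho y_\rho X$. Two representations are equivalent if there is a linear isomorphism between their spaces commuting with the action of $\mathcal{W}_N$. *)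

theory Defs
  imports Complex_Main "Jordan_Normal_Form.Matrix"
begin

text \<open>Finite-dimensional representations of the Weyl algebra W_N on C^n are given by
  the images of the generators: an n x n matrix E (the image of E, invertible, so that
  E^{-1} is sent to its inverse) and an n x n matrix D with E D = omega D E.\<close>

definition omega :: "nat \<Rightarrow> complex" where
  "omega N = cis (2 * pi / real N)"

definition is_rep :: "nat \<Rightarrow> nat \<Rightarrow> complex mat \<Rightarrow> complex mat \<Rightarrow> bool" where
  "is_rep N n E D \<longleftrightarrow> E \<in> carrier_mat n n \<and> D \<in> carrier_mat n n \<and> invertible_mat E
     \<and> E * D = omega N \<cdot>\<^sub>m (D * E)"

definition cyclic_rep :: "nat \<Rightarrow> nat \<Rightarrow> complex mat \<Rightarrow> complex mat \<Rightarrow> bool" where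
  "cyclic_rep N n E D \<longleftrightarrow> is_rep N n E D \<and> invertible_mat E \<and> invertible_mat D"

text \<open>Subspaces of C^n and invariance under the generators E, E^{-1}, D
  (invariance under E^{-1} means W is contained in E(W)).\<close>
definition subspace_vec :: "nat \<Rightarrow> complex vec set \<Rightarrow> bool" where
  "subspace_vec n W \<longleftrightarrow> W \<subseteq> carrier_vec n \<and> 0\<^sub>v n \<in> W
     \<and> (\<forall>v\<in>W. \<forall>w\<in>W. v + w \<in> W) \<and> (\<forall>c. \<forall>v\<in>W. c \<cdot>\<^sub>v v \<in> W)"

definition invariant_subspace :: "nat \<Rightarrow> complex mat \<Rightarrow> complex mat \<Rightarrow> complex vec set \<Rightarrow> bool" where
  "invariant_subspace n E D W \<longleftrightarrow> subspace_vec n W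
     \<and> (\<forall>v\<in>W. E *\<^sub>v v \<in> W) \<and> (\<forall>v\<in>W. D *\<^sub>v v \<in> W)
     \<and> (\<forall>v\<in>W. \<exists>w\<in>W. E *\<^sub>v w = v)"

definition irreducible_rep :: "nat \<Rightarrow> nat \<Rightarrow> complex mat \<Rightarrow> complex mat \<Rightarrow> bool" where
  "irreducible_rep N n E D \<longleftrightarrow> is_rep N n E D \<and> n > 0
     \<and> (\<forall>W. invariant_subspace n E D W \<longrightarrow> W = {0\<^sub>v n} \<or> W = carrier_vec n)"

definition equiv_rep :: "nat \<Rightarrow> complex mat \<Rightarrow> complex mat \<Rightarrow> nat \<Rightarrow> complex mat \<Rightarrow> complex mat \<Rightarrow> bool" where
  "equiv_rep n E D m E' D' \<longleftrightarrow> n = m \<and> (\<exists>P. P \<in> carrier_mat m n \<and> invertible_mat P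
     \<and> P * E = E' * P \<and> P * D = D' * P)"

definition X_mat :: "nat \<Rightarrow> complex mat" where
  "X_mat N = mat N N (\<lambda>(i, j). if i mod N = (j + 1) mod N then 1 else 0)"

definition Z_mat :: "nat \<Rightarrow> complex mat" where
  "Z_mat N = mat N N (\<lambda>(i, j). if i = j then omega N ^ i else 0)"

definition std_E :: "nat \<Rightarrow> complex \<Rightarrow> complex \<Rightarrow> complex mat" where
  "std_E N a y = (a^2) \<cdot>\<^sub>m Z_mat N"

definition std_D :: "nat \<Rightarrow> complex \<Rightarrow> complex \<Rightarrow> complex mat" where
  "std_D N a y = (a * y) \<cdot>\<^sub>m X_mat N"

text \<open>Kronecker product; the basis vector e_i (x) f_k of C^m (x) C^n has index i*n+k.\<close>
definition kron :: "complex mat \<Rightarrow> complex mat \<Rightarrow> complex mat" where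
  "kron A B = mat (dim_row A * dim_row B) (dim_col A * dim_col B)
     (\<lambda>(i, j). A $$ (i div dim_row B, j div dim_col B) * B $$ (i mod dim_row B, j mod dim_col B))"

text \<open>Tensor product of representations via the coproduct:
  Delta(E) = E (x) E, Delta(D) = E (x) D + D (x) 1.\<close>
definition tensor_E :: "complex mat \<Rightarrow> complex mat \<Rightarrow> complex mat" where
  "tensor_E E1 E2 = kron E1 E2"

definition tensor_D :: "complex mat \<Rightarrow> complex mat \<Rightarrow> complex mat \<Rightarrow> complex mat \<Rightarrow> complex mat" where
  "tensor_D E1 D1 E2 D2 = kron E1 D2 + kron D1 (1\<^sub>m (dim_row E2))"

definition diag_copies :: "nat \<Rightarrow> complex mat \<Rightarrow> complex mat" where
  "diag_copies k A = mat (k * dim_row A) (k * dim_col A)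
     (\<lambda>(i, j). if i div dim_row A = j div dim_col A
               then A $$ (i mod dim_row A, j mod dim_col A) else 0)"

end

theory Submission
  imports Defs "Jordan_Normal_Form.Determinant" "Jordan_Normal_Form.Spectral_Radius"
begin

lemma omega_pow: "omega N ^ k = cis (2 * pi * real k / real N)"
  unfolding omega_def by (simp add: DeMoivre mult.commute)

lemma omega_N: "N > 0 \<Longrightarrow> omega N ^ N = 1"
  by (simp add: omega_pow)

lemma omega_nz[simp]: "omega N \<noteq> 0"
  unfolding omega_def by simp

lemma omega_inj: assumes "N > 0" "p < N" "m < N" "omega N ^ p = omega N ^ m" shows "p = m"
proof -
  have "inj_on (\<lambda>k. cis (2 * pi * real k / real N)) {..<N}"
    using bij_betw_roots_unity[OF assms(1)] by (simp add: bij_betw_def)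
  then show ?thesis using assms by (auto simp: omega_pow inj_on_def)
qed

lemma omega_pow_ne1: assumes "N > 0" "0 < p" "p < N" shows "omega N ^ p \<noteq> 1"
  using omega_inj[of N p 0] assms by auto

lemma omega_mod: "N > 0 \<Longrightarrow> omega N ^ (k mod N) = omega N ^ k"
proof -
  assume N: "N > 0"
  have "omega N ^ k = (omega N ^ N) ^ (k div N) * omega N ^ (k mod N)"
  proof -
    have "omega N ^ k = omega N ^ (N * (k div N) + k mod N)" by (simp only: mult_div_mod_eq)
    also have "\<dots> = (omega N ^ N) ^ (k div N) * omega N ^ (k mod N)" by (simp only: power_add power_mult)
    finally show ?thesis .
  qed
  then show ?thesis using omega_N[OF N] by simp
qed

lemma roots_unity_omega: assumes "N > 0" "w ^ N = 1" shows "\<exists>j<N. w = omega N ^ j"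
proof -
  have "w \<in> (\<lambda>k. cis (2 * pi * real k / real N)) ` {..<N}"
    using bij_betw_roots_unity[OF assms(1)] assms(2) by (auto simp: bij_betw_def)
  then show ?thesis by (auto simp: omega_pow)
qed

lemma nth_root_exists: assumes "N > 0" "(c::complex) \<noteq> 0" shows "\<exists>t. t ^ N = c"
proof -
  have "(1::complex) \<in> {z. z ^ N = 1}" by simp
  then show ?thesis using bij_betw_nth_root_unity[OF assms(2) assms(1)]
    unfolding bij_betw_def by blast
qed


lemma geom_root: assumes "N > 0" "(z::complex) ^ N = 1" shows "(\<Sum>k<N. z ^ k) = (if z = 1 then of_nat N else 0)"
proof (cases "z = 1")
  case False
  then show ?thesis using assms sum_gp_strict[of z N] by simp
qed simp

lemma sum_div_mod: "(\<Sum>j<r*N. f j) = (\<Sum>c<r. \<Sum>m<N. f (c*N+m))" for r N :: nat and f :: "nat \<Rightarrow> 'a::comm_monoid_add"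
proof (induction r)
  case (Suc r)
  have "(\<Sum>j<Suc r*N. f j) = (\<Sum>j<r*N + N. f j)" by (simp add: add.commute)
  also have "\<dots> = (\<Sum>j<r*N. f j) + (\<Sum>j=r*N..<r*N+N. f j)" 
    using sum.atLeastLessThan_concat[of 0 "r*N" "r*N+N" f] by (simp add: atLeast0LessThan)
  also have "(\<Sum>j=r*N..<r*N+N. f j) = (\<Sum>m<N. f (r*N+m))"
    using sum.shift_bounds_nat_ivl[of f 0 "r*N" N] by (simp add: atLeast0LessThan add.commute)
  finally show ?case using Suc by simp
qed simp


lemma smult_one_mat[simp]: "(1::'a::semiring_1) \<cdot>\<^sub>m A = A"
  by (auto simp: mat_eq_iff)
lemma smult_smult_mat[simp]: "(a::'a::semigroup_mult) \<cdot>\<^sub>m (b \<cdot>\<^sub>m A) = (a * b) \<cdot>\<^sub>m A"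
  by (auto simp: mat_eq_iff mult.assoc)

lemma pow_mat_Suc_left: assumes "A \<in> carrier_mat n n" shows "A ^\<^sub>m Suc k = A * A ^\<^sub>m k"
proof (induction k)
  case 0 then show ?case using assms by simp
next
  case (Suc k)
  have "A ^\<^sub>m Suc (Suc k) = (A * A ^\<^sub>m k) * A" using Suc by simp
  also have "\<dots> = A * (A ^\<^sub>m k * A)" using assms by (simp add: assoc_mult_mat[of _ n n _ n _ n])
  finally show ?case by simp
qed

lemma pow_mat_add: assumes "A \<in> carrier_mat n n" shows "A ^\<^sub>m (k + l) = A ^\<^sub>m k * A ^\<^sub>m l"
proof (induction l)
  case 0 then show ?case using assms by simp
next
  case (Suc l)
  have "A ^\<^sub>m (k + Suc l) = (A ^\<^sub>m k * A ^\<^sub>m l) * A" using Suc by simp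
  also have "\<dots> = A ^\<^sub>m k * (A ^\<^sub>m l * A)" using assms by (simp add: assoc_mult_mat[of _ n n _ n _ n])
  finally show ?case by simp
qed

lemma pow_mat_smult: fixes A :: "complex mat" assumes "A \<in> carrier_mat n n" shows "(c \<cdot>\<^sub>m A) ^\<^sub>m k = (c ^ k) \<cdot>\<^sub>m (A ^\<^sub>m k)"
proof (induction k)
  case 0 then show ?case using assms by (auto simp: mat_eq_iff)
next
  case (Suc k)
  have "(c \<cdot>\<^sub>m A) ^\<^sub>m Suc k = ((c ^ k) \<cdot>\<^sub>m (A ^\<^sub>m k)) * (c \<cdot>\<^sub>m A)" using Suc by simp
  also have "\<dots> = (c ^ k) \<cdot>\<^sub>m ((A ^\<^sub>m k) * (c \<cdot>\<^sub>m A))"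
    by (rule mult_smult_assoc_mat) (use assms in auto)
  also have "(A ^\<^sub>m k) * (c \<cdot>\<^sub>m A) = c \<cdot>\<^sub>m (A ^\<^sub>m k * A)"
    by (rule mult_smult_distrib) (use assms in auto)
  also have "(c ^ k) \<cdot>\<^sub>m (c \<cdot>\<^sub>m (A ^\<^sub>m k * A)) = (c ^ Suc k) \<cdot>\<^sub>m (A ^\<^sub>m Suc k)"
    by (simp add: mult.commute)
  finally show ?case .
qed

lemma pow_mat_qcomm: fixes A :: "complex mat" assumes A: "A \<in> carrier_mat n n" and B: "B \<in> carrier_mat n n"
  and AB: "A * B = q \<cdot>\<^sub>m (B * A)"
  shows "A * B ^\<^sub>m k = (q ^ k) \<cdot>\<^sub>m (B ^\<^sub>m k * A)"
proof (induction k)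
  case 0 then show ?case using A B by simp
next
  case (Suc k)
  have Bk: "B ^\<^sub>m k \<in> carrier_mat n n" using B by simp
  have "A * B ^\<^sub>m Suc k = (A * B ^\<^sub>m k) * B" using A B by (simp add: assoc_mult_mat[of _ n n _ n _ n])
  also have "\<dots> = (q ^ k) \<cdot>\<^sub>m ((B ^\<^sub>m k * A) * B)" unfolding Suc
    by (rule mult_smult_assoc_mat) (use A B in auto)
  also have "(B ^\<^sub>m k * A) * B = B ^\<^sub>m k * (A * B)"
    by (rule assoc_mult_mat) (use A B in auto)
  also have "B ^\<^sub>m k * (A * B) = B ^\<^sub>m k * (q \<cdot>\<^sub>m (B * A))" unfolding AB ..
  also have "\<dots> = q \<cdot>\<^sub>m (B ^\<^sub>m k * (B * A))" by (rule mult_smult_distrib) (use A B in auto)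
  also have "B ^\<^sub>m k * (B * A) = B ^\<^sub>m Suc k * A" using A B by (simp add: assoc_mult_mat[OF Bk B A])
  finally show ?case by (simp add: mult.commute)
qed

lemma pow_mat_comm: fixes A :: "complex mat" assumes A: "A \<in> carrier_mat n n" and B: "B \<in> carrier_mat n n"
  and AB: "A * B = B * A"
  shows "A * B ^\<^sub>m k = B ^\<^sub>m k * A"
  using pow_mat_qcomm[OF A B, of 1 k] AB A B by simp

lemma pow_mat_intertw: fixes P :: "complex mat" assumes P: "P \<in> carrier_mat m n" and A: "A \<in> carrier_mat n n" and B: "B \<in> carrier_mat m m"
  and PA: "P * A = B * P"
  shows "P * A ^\<^sub>m k = B ^\<^sub>m k * P"
proof (induction k)
  case 0 then show ?case using P A B by simp
next
  case (Suc k)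
  have "P * A ^\<^sub>m Suc k = (P * A ^\<^sub>m k) * A" using P A by (simp add: assoc_mult_mat[of _ m n _ n _ n])
  also have "\<dots> = B ^\<^sub>m k * (P * A)" using Suc P A B by (simp add: assoc_mult_mat[OF pow_carrier_mat[OF B] P A])
  also have "\<dots> = B ^\<^sub>m Suc k * P" using P A B unfolding PA by (simp add: assoc_mult_mat[of _ m m _ m _ n])
  finally show ?case .
qed

lemma Z_carrier[simp]: "Z_mat N \<in> carrier_mat N N" and X_carrier[simp]: "X_mat N \<in> carrier_mat N N"
  by (auto simp: Z_mat_def X_mat_def)
lemma Z_index[simp]: "i < N \<Longrightarrow> j < N \<Longrightarrow> Z_mat N $$ (i,j) = (if i = j then omega N ^ i else 0)"
  by (simp add: Z_mat_def)
lemma X_index[simp]: "i < N \<Longrightarrow> j < N \<Longrightarrow> X_mat N $$ (i,j) = (if i = (j + 1) mod N then 1 else 0)"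
  by (simp add: X_mat_def)
lemma Z_dims[simp]: "dim_row (Z_mat N) = N" "dim_col (Z_mat N) = N"
  and X_dims[simp]: "dim_row (X_mat N) = N" "dim_col (X_mat N) = N"
  by (auto simp: Z_mat_def X_mat_def)
lemma std_carrier[simp]: "std_E N a y \<in> carrier_mat N N" "std_D N a y \<in> carrier_mat N N"
  by (auto simp: std_E_def std_D_def)
lemma std_dims[simp]: "dim_row (std_E N a y) = N" "dim_col (std_E N a y) = N"
   "dim_row (std_D N a y) = N" "dim_col (std_D N a y) = N"
  by (auto simp: std_E_def std_D_def)
lemma stdE_index[simp]: "i < N \<Longrightarrow> j < N \<Longrightarrow> std_E N a y $$ (i,j) = (if i = j then a^2 * omega N ^ i else 0)"
  by (simp add: std_E_def)
lemma stdD_index[simp]: "i < N \<Longrightarrow> j < N \<Longrightarrow> std_D N a y $$ (i,j) = (if i = (j + 1) mod N then a * y else 0)"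
  by (simp add: std_D_def)

lemma diag_copies_carrier[simp]: "A \<in> carrier_mat N N \<Longrightarrow> diag_copies r A \<in> carrier_mat (r*N) (r*N)"
  by (auto simp: diag_copies_def)
lemma diag_copies_index: "A \<in> carrier_mat N N \<Longrightarrow> i < r*N \<Longrightarrow> j < r*N \<Longrightarrow>
   diag_copies r A $$ (i,j) = (if i div N = j div N then A $$ (i mod N, j mod N) else 0)"
  by (auto simp: diag_copies_def)

lemma diag_copies_1: assumes "A \<in> carrier_mat N N" shows "diag_copies 1 A = A"
  using assms by (auto simp: diag_copies_def mat_eq_iff)

lemma kron_carrier[simp]: "A \<in> carrier_mat a b \<Longrightarrow> B \<in> carrier_mat c d \<Longrightarrow> kron A B \<in> carrier_mat (a*c) (b*d)"
  by (auto simp: kron_def)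
lemma kron_index: "A \<in> carrier_mat a b \<Longrightarrow> B \<in> carrier_mat c d \<Longrightarrow> i < a*c \<Longrightarrow> j < b*d \<Longrightarrow>
   kron A B $$ (i,j) = A $$ (i div c, j div d) * B $$ (i mod c, j mod d)"
  by (auto simp: kron_def)


lemma mat_mult_index: "A \<in> carrier_mat a b \<Longrightarrow> B \<in> carrier_mat b c \<Longrightarrow> i < a \<Longrightarrow> j < c \<Longrightarrow>
  (A * B) $$ (i,j) = (\<Sum>l<b. A $$ (i,l) * B $$ (l,j))"
  by (auto simp: scalar_prod_def atLeast0LessThan intro: sum.cong)

lemma mat_vec_index: "A \<in> carrier_mat a b \<Longrightarrow> v \<in> carrier_vec b \<Longrightarrow> i < a \<Longrightarrow>
  (A *\<^sub>v v) $ i = (\<Sum>l<b. A $$ (i,l) * v $ l)"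
  by (auto simp: scalar_prod_def atLeast0LessThan intro: sum.cong)

lemma mult_mat_vec_zero: assumes A: "A \<in> carrier_mat n m" shows "A *\<^sub>v 0\<^sub>v m = 0\<^sub>v n"
proof (rule eq_vecI)
  fix i assume "i < dim_vec (0\<^sub>v n :: 'a vec)"
  then have i: "i < n" by simp
  have "(A *\<^sub>v 0\<^sub>v m) $ i = (\<Sum>l<m. A $$ (i,l) * 0\<^sub>v m $ l)"
    using A i by (auto simp: scalar_prod_def atLeast0LessThan intro: sum.cong)
  also have "\<dots> = 0" by simp
  finally show "(A *\<^sub>v 0\<^sub>v m) $ i = 0\<^sub>v n $ i" using i by simp
qed (use A in simp)

lemma smult_vec_zero_cancel: assumes "c \<noteq> (0::complex)" "v \<in> carrier_vec n" "c \<cdot>\<^sub>v v = 0\<^sub>v n"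
  shows "v = 0\<^sub>v n"
proof (rule eq_vecI)
  fix i assume "i < dim_vec (0\<^sub>v n :: complex vec)"
  then have i: "i < n" by simp
  have "(c \<cdot>\<^sub>v v) $ i = 0" using assms(3) i by simp
  moreover have "dim_vec v = n" using assms(2) by auto
  ultimately have "c * v $ i = 0" using i by simp
  then show "v $ i = 0\<^sub>v n $ i" using assms i by simp
qed (use assms in simp)

lemma smult_mat_mult_vec: assumes A: "A \<in> carrier_mat n m" and v: "v \<in> carrier_vec m"
  shows "(c \<cdot>\<^sub>m A) *\<^sub>v v = (c::complex) \<cdot>\<^sub>v (A *\<^sub>v v)"
proof (rule eq_vecI)
  fix i assume "i < dim_vec (c \<cdot>\<^sub>v (A *\<^sub>v v))"
  then have i: "i < n" using A by simp
  have cA: "c \<cdot>\<^sub>m A \<in> carrier_mat n m" using A by simp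
  show "((c \<cdot>\<^sub>m A) *\<^sub>v v) $ i = (c \<cdot>\<^sub>v (A *\<^sub>v v)) $ i"
    unfolding mat_vec_index[OF cA v i] using mat_vec_index[OF A v i] i A
    by (simp add: sum_distrib_left mult.assoc)
qed (use A in simp)

lemma idx_eq_iff: "(l::nat) = j \<longleftrightarrow> l div N = j div N \<and> l mod N = j mod N"
  by (metis div_mult_mod_eq)

definition Qmat :: "nat \<Rightarrow> nat \<Rightarrow> nat \<Rightarrow> complex \<Rightarrow> complex mat \<Rightarrow> complex mat \<Rightarrow> complex mat" where
  "Qmat N n r t D U = mat n (r*N) (\<lambda>(i,j). (inverse (t ^ (j mod N)) \<cdot>\<^sub>m (D ^\<^sub>m (j mod N) * U)) $$ (i, j div N))"

lemma Qmat_carrier: "Qmat N n r t D U \<in> carrier_mat n (r*N)"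
  by (simp add: Qmat_def)

lemma Qmat_mult_left:
  assumes N: "N > 0" and M: "M \<in> carrier_mat n n" and D: "D \<in> carrier_mat n n" and U: "U \<in> carrier_mat n r"
  and i: "i < n" and j: "j < r * N"
  shows "(M * Qmat N n r t D U) $$ (i,j) = (M * (inverse (t ^ (j mod N)) \<cdot>\<^sub>m (D ^\<^sub>m (j mod N) * U))) $$ (i, j div N)"
proof -
  have jd: "j div N < r" using j by (simp add: less_mult_imp_div_less)
  have W: "inverse (t ^ (j mod N)) \<cdot>\<^sub>m (D ^\<^sub>m (j mod N) * U) \<in> carrier_mat n r" using D U by auto
  show ?thesis
    using i jd j
    by (simp add: mat_mult_index[OF M Qmat_carrier i j] mat_mult_index[OF M W i jd], simp add: Qmat_def)
qed


lemma diag_stdE_index: assumes N: "N > 0" and l: "l < r*N" and j: "j < r*N"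
  shows "diag_copies r (std_E N a y) $$ (l,j) = (if l = j then a^2 * omega N ^ (j mod N) else 0)"
  using N l j by (auto simp: diag_copies_index[of "std_E N a y" N] idx_eq_iff[of l j N])

lemma diag_stdD_index: assumes N: "N > 0" and l: "l < r*N" and j: "j < r*N"
  shows "diag_copies r (std_D N a y) $$ (l,j) = (if l = (j div N) * N + (j mod N + 1) mod N then a * y else 0)"
proof -
  let ?j = "(j div N) * N + (j mod N + 1) mod N"
  have jdm: "?j div N = j div N" "?j mod N = (j mod N + 1) mod N" using N by auto
  have e: "l = ?j \<longleftrightarrow> l div N = j div N \<and> l mod N = (j mod N + 1) mod N"
    using idx_eq_iff[of l ?j N] jdm by simp
  show ?thesis
    using N l j unfolding e by (auto simp: diag_copies_index[of "std_D N a y" N])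
qed

lemma mult_diag_stdE:
  assumes N: "N > 0" and Q: "Q \<in> carrier_mat n (r*N)" and i: "i < n" and j: "j < r * N"
  shows "(Q * diag_copies r (std_E N a y)) $$ (i,j) = Q $$ (i,j) * (a^2 * omega N ^ (j mod N))"
proof -
  have "(Q * diag_copies r (std_E N a y)) $$ (i,j) = (\<Sum>l<r*N. Q $$ (i,l) * diag_copies r (std_E N a y) $$ (l,j))"
    by (rule mat_mult_index[OF Q _ i j]) simp
  also have "\<dots> = (\<Sum>l<r*N. if l = j then Q $$ (i,j) * (a^2 * omega N ^ (j mod N)) else 0)"
  proof (rule sum.cong[OF refl])
    fix l assume l: "l \<in> {..<r*N}"
    show "Q $$ (i,l) * diag_copies r (std_E N a y) $$ (l,j) = (if l = j then Q $$ (i,j) * (a^2 * omega N ^ (j mod N)) else 0)"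
      using l j N by (simp add: diag_stdE_index)
  qed
  also have "\<dots> = Q $$ (i,j) * (a^2 * omega N ^ (j mod N))" using j by simp
  finally show ?thesis .
qed

lemma mult_diag_stdD:
  assumes N: "N > 0" and Q: "Q \<in> carrier_mat n (r*N)" and i: "i < n" and j: "j < r * N"
  shows "(Q * diag_copies r (std_D N a y)) $$ (i,j) = Q $$ (i, (j div N) * N + (j mod N + 1) mod N) * (a * y)"
proof -
  let ?j = "(j div N) * N + (j mod N + 1) mod N"
  have jd: "j div N < r" using j by (simp add: less_mult_imp_div_less)
  have j': "?j < r * N"
  proof -
    have "?j < (j div N) * N + N" using N by simp
    also have "\<dots> = Suc (j div N) * N" by simp
    also have "\<dots> \<le> r * N" using jd by (intro mult_le_mono1) simp
    finally show ?thesis .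
  qed
  have "(Q * diag_copies r (std_D N a y)) $$ (i,j) = (\<Sum>l<r*N. Q $$ (i,l) * diag_copies r (std_D N a y) $$ (l,j))"
    by (rule mat_mult_index[OF Q _ i j]) simp
  also have "\<dots> = (\<Sum>l<r*N. if l = ?j then Q $$ (i,?j) * (a * y) else 0)"
  proof (rule sum.cong[OF refl])
    fix l assume l: "l \<in> {..<r*N}"
    have jdm: "?j div N = j div N" "?j mod N = (j mod N + 1) mod N" using N by auto
    show "Q $$ (i,l) * diag_copies r (std_D N a y) $$ (l,j) = (if l = ?j then Q $$ (i,?j) * (a * y) else 0)"
      using l j N by (simp add: diag_stdD_index)
  qed
  also have "\<dots> = Q $$ (i,?j) * (a * y)" using j' by simp
  finally show ?thesis .
qed


lemma EW: assumes E: "E \<in> carrier_mat n n" and D: "D \<in> carrier_mat n n" and U: "U \<in> carrier_mat n r"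
  and ED: "E * D = omega N \<cdot>\<^sub>m (D * E)" and EU: "E * U = (a^2) \<cdot>\<^sub>m U"
  shows "E * (D ^\<^sub>m m * U) = (a^2 * omega N ^ m) \<cdot>\<^sub>m (D ^\<^sub>m m * U)"
proof -
  have Dm: "D ^\<^sub>m m \<in> carrier_mat n n" using D by simp
  have "E * (D ^\<^sub>m m * U) = (E * D ^\<^sub>m m) * U" using assoc_mult_mat[OF E Dm U] by simp
  also have "\<dots> = ((omega N ^ m) \<cdot>\<^sub>m (D ^\<^sub>m m * E)) * U" using pow_mat_qcomm[OF E D ED] by simp
  also have "\<dots> = (omega N ^ m) \<cdot>\<^sub>m ((D ^\<^sub>m m * E) * U)" by (rule mult_smult_assoc_mat) (use E D U in auto)
  also have "(D ^\<^sub>m m * E) * U = D ^\<^sub>m m * (E * U)" using assoc_mult_mat[OF Dm E U] by simp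
  also have "\<dots> = (a^2) \<cdot>\<^sub>m (D ^\<^sub>m m * U)" unfolding EU by (rule mult_smult_distrib) (use Dm U in auto)
  finally show ?thesis by (simp add: mult.commute)
qed

lemma G_E:
  assumes N: "N > 0" and E: "E \<in> carrier_mat n n" and D: "D \<in> carrier_mat n n" and U: "U \<in> carrier_mat n r"
  and ED: "E * D = omega N \<cdot>\<^sub>m (D * E)" and EU: "E * U = (a^2) \<cdot>\<^sub>m U"
  shows "E * Qmat N n r t D U = Qmat N n r t D U * diag_copies r (std_E N a y)"
proof (rule eq_matI)
  fix i j assume i: "i < dim_row (Qmat N n r t D U * diag_copies r (std_E N a y))"
    and j: "j < dim_col (Qmat N n r t D U * diag_copies r (std_E N a y))"
  then have i: "i < n" and j: "j < r * N" by (auto simp: Qmat_def diag_copies_def)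
  have jd: "j div N < r" using j by (simp add: less_mult_imp_div_less)
  let ?m = "j mod N"
  have Dm: "D ^\<^sub>m ?m * U \<in> carrier_mat n r" using mult_carrier_mat[OF pow_carrier_mat[OF D] U] .
  have "E * (inverse (t ^ ?m) \<cdot>\<^sub>m (D ^\<^sub>m ?m * U)) = inverse (t ^ ?m) \<cdot>\<^sub>m (E * (D ^\<^sub>m ?m * U))"
    by (rule mult_smult_distrib) (use E Dm in auto)
  also have "\<dots> = inverse (t ^ ?m) \<cdot>\<^sub>m ((a^2 * omega N ^ ?m) \<cdot>\<^sub>m (D ^\<^sub>m ?m * U))"
    using EW[OF E D U ED EU] by simp
  finally have eq: "E * (inverse (t ^ ?m) \<cdot>\<^sub>m (D ^\<^sub>m ?m * U)) = inverse (t ^ ?m) \<cdot>\<^sub>m ((a^2 * omega N ^ ?m) \<cdot>\<^sub>m (D ^\<^sub>m ?m * U))" .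
  show "(E * Qmat N n r t D U) $$ (i, j) = (Qmat N n r t D U * diag_copies r (std_E N a y)) $$ (i, j)"
    unfolding Qmat_mult_left[OF N E D U i j] mult_diag_stdE[OF N Qmat_carrier i j] eq
    using i j jd Dm D U by (simp add: Qmat_def)
qed (use E in \<open>auto simp: Qmat_def diag_copies_def\<close>)

lemma G_D:
  assumes N: "N > 0" and D: "D \<in> carrier_mat n n" and U: "U \<in> carrier_mat n r"
  and DU: "D ^\<^sub>m N * U = (t ^ N) \<cdot>\<^sub>m U" and a: "a \<noteq> 0" and t: "t \<noteq> 0"
  shows "D * Qmat N n r t D U = Qmat N n r t D U * diag_copies r (std_D N a (t / a))"
proof (rule eq_matI)
  fix i j assume i: "i < dim_row (Qmat N n r t D U * diag_copies r (std_D N a (t/a)))"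
    and j: "j < dim_col (Qmat N n r t D U * diag_copies r (std_D N a (t/a)))"
  then have i: "i < n" and j: "j < r * N" by (auto simp: Qmat_def diag_copies_def)
  have jd: "j div N < r" using j by (simp add: less_mult_imp_div_less)
  let ?m = "j mod N"
  let ?j = "(j div N) * N + (j mod N + 1) mod N"
  have j': "?j < r * N"
  proof -
    have "?j < (j div N) * N + N" using N by simp
    also have "\<dots> = Suc (j div N) * N" by simp
    also have "\<dots> \<le> r * N" using jd by (intro mult_le_mono1) simp
    finally show ?thesis .
  qed
  have jdm: "?j div N = j div N" "?j mod N = (j mod N + 1) mod N" using N by auto
  have Dm: "D ^\<^sub>m ?m * U \<in> carrier_mat n r" using mult_carrier_mat[OF pow_carrier_mat[OF D] U] .
  have DmS: "D * (D ^\<^sub>m ?m * U) = D ^\<^sub>m Suc ?m * U"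
    using assoc_mult_mat[OF D pow_carrier_mat[OF D] U] pow_mat_Suc_left[OF D] by simp
  have "D * (inverse (t ^ ?m) \<cdot>\<^sub>m (D ^\<^sub>m ?m * U)) = inverse (t ^ ?m) \<cdot>\<^sub>m (D * (D ^\<^sub>m ?m * U))"
    by (rule mult_smult_distrib) (use D Dm in auto)
  also have "\<dots> = inverse (t ^ ?m) \<cdot>\<^sub>m (D ^\<^sub>m Suc ?m * U)" unfolding DmS ..
  finally have eq: "D * (inverse (t ^ ?m) \<cdot>\<^sub>m (D ^\<^sub>m ?m * U)) = inverse (t ^ ?m) \<cdot>\<^sub>m (D ^\<^sub>m Suc ?m * U)" .
  have lhs: "(D * Qmat N n r t D U) $$ (i, j) = inverse (t ^ ?m) * (D ^\<^sub>m Suc ?m * U) $$ (i, j div N)"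
    unfolding Qmat_mult_left[OF N D D U i j] eq using i jd D U by simp
  have rhs: "(Qmat N n r t D U * diag_copies r (std_D N a (t/a))) $$ (i, j)
     = inverse (t ^ ((j mod N + 1) mod N)) * (D ^\<^sub>m ((j mod N + 1) mod N) * U) $$ (i, j div N) * t"
    unfolding mult_diag_stdD[OF N Qmat_carrier i j] using i j' jdm a D U jd by (simp add: Qmat_def)
  show "(D * Qmat N n r t D U) $$ (i, j) = (Qmat N n r t D U * diag_copies r (std_D N a (t/a))) $$ (i, j)"
  proof (cases "Suc ?m < N")
    case True
    then have "(j mod N + 1) mod N = Suc ?m" by simp
    then show ?thesis unfolding lhs rhs using t by (simp add: field_simps)
  next
    case False
    then have SN: "Suc ?m = N" using N by (metis Suc_lessI mod_less_divisor)
    then have m0: "(j mod N + 1) mod N = 0" by simp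
    have e1: "(D ^\<^sub>m Suc ?m * U) $$ (i, j div N) = t ^ N * U $$ (i, j div N)"
      unfolding SN DU using i jd U by simp
    have tN: "t ^ N = t * t ^ (j mod N)" by (subst SN[symmetric]) simp
    have e2: "(D ^\<^sub>m 0 * U) $$ (i, j div N) = U $$ (i, j div N)" using D U by simp
    show ?thesis unfolding lhs rhs m0 e1 e2 tN using t by (simp add: field_simps)
  qed
qed (use D in \<open>auto simp: Qmat_def diag_copies_def\<close>)


lemma diag_stdE_mult_vec: assumes N: "N > 0" and v: "v \<in> carrier_vec (r*N)"
  shows "diag_copies r (std_E N a y) *\<^sub>v v = vec (r*N) (\<lambda>j. a^2 * omega N ^ (j mod N) * v $ j)"
proof (rule eq_vecI)
  fix j assume "j < dim_vec (vec (r*N) (\<lambda>j. a^2 * omega N ^ (j mod N) * v $ j))"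
  then have j: "j < r * N" by simp
  have "(diag_copies r (std_E N a y) *\<^sub>v v) $ j = (\<Sum>l<r*N. diag_copies r (std_E N a y) $$ (j,l) * v $ l)"
    by (rule mat_vec_index[OF _ v j]) simp
  also have "\<dots> = (\<Sum>l<r*N. if l = j then a^2 * omega N ^ (j mod N) * v $ j else 0)"
    by (rule sum.cong[OF refl]) (use N j in \<open>auto simp: diag_stdE_index\<close>)
  also have "\<dots> = a^2 * omega N ^ (j mod N) * v $ j" using j by simp
  finally show "(diag_copies r (std_E N a y) *\<^sub>v v) $ j = vec (r*N) (\<lambda>j. a^2 * omega N ^ (j mod N) * v $ j) $ j"
    using j by simp
qed (simp add: diag_copies_def)

lemma char_sum: assumes N: "N > 0" and a: "a \<noteq> 0" and p: "p < N" and m: "m < N"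
  shows "(\<Sum>k<N. inverse ((a^2 * omega N ^ m) ^ k) * (a^2 * omega N ^ p) ^ k) = (if p = m then of_nat N else 0)"
proof -
  let ?z = "omega N ^ p / omega N ^ m"
  have z: "(a^2 * omega N ^ p) / (a^2 * omega N ^ m) = ?z" using a by simp
  have "inverse ((a^2 * omega N ^ m) ^ k) * (a^2 * omega N ^ p) ^ k = ?z ^ k" for k
  proof -
    have "inverse ((a^2 * omega N ^ m) ^ k) * (a^2 * omega N ^ p) ^ k = (a^2 * omega N ^ p) ^ k / (a^2 * omega N ^ m) ^ k"
      by (simp add: divide_inverse mult.commute)
    also have "\<dots> = ((a^2 * omega N ^ p) / (a^2 * omega N ^ m)) ^ k" by (rule power_divide[symmetric])
    finally show ?thesis unfolding z .
  qed
  then have "(\<Sum>k<N. inverse ((a^2 * omega N ^ m) ^ k) * (a^2 * omega N ^ p) ^ k) = (\<Sum>k<N. ?z ^ k)" by simp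
  also have "\<dots> = (if ?z = 1 then of_nat N else 0)"
  proof (rule geom_root[OF N])
    have pw: "(omega N ^ q) ^ N = 1" for q
    proof -
      have "(omega N ^ q) ^ N = omega N ^ (q * N)" by (rule power_mult[symmetric])
      also have "\<dots> = (omega N ^ N) ^ q" by (subst mult.commute) (rule power_mult)
      finally show ?thesis using omega_N[OF N] by simp
    qed
    have "?z ^ N = (omega N ^ p) ^ N / (omega N ^ m) ^ N" by (rule power_divide)
    then show "?z ^ N = 1" using pw by simp
  qed
  also have "(?z = 1) = (p = m)" using omega_inj[OF N p m] by auto
  finally show ?thesis .
qed

lemma G_inj:
  assumes N: "N > 0" and E: "E \<in> carrier_mat n n" and D: "D \<in> carrier_mat n n" and U: "U \<in> carrier_mat n r"
  and ED: "E * D = omega N \<cdot>\<^sub>m (D * E)" and EU: "E * U = (a^2) \<cdot>\<^sub>m U"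
  and DU: "D ^\<^sub>m N * U = (t ^ N) \<cdot>\<^sub>m U" and a: "a \<noteq> 0" and t: "t \<noteq> 0"
  and Uinj: "\<And>z. z \<in> carrier_vec r \<Longrightarrow> U *\<^sub>v z = 0\<^sub>v n \<Longrightarrow> z = 0\<^sub>v r"
  and x: "x \<in> carrier_vec (r*N)" and Qx: "Qmat N n r t D U *\<^sub>v x = 0\<^sub>v n"
  shows "x = 0\<^sub>v (r*N)"
proof -
  let ?Q = "Qmat N n r t D U"
  let ?L = "diag_copies r (std_E N a 1)"
  have Q: "?Q \<in> carrier_mat n (r*N)" by (rule Qmat_carrier)
  have L: "?L \<in> carrier_mat (r*N) (r*N)" by simp
  define xk where "xk k = vec (r*N) (\<lambda>j. (a^2 * omega N ^ (j mod N)) ^ k * x $ j)" for k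
  have xkc: "xk k \<in> carrier_vec (r*N)" for k by (simp add: xk_def)
  have Qxk: "?Q *\<^sub>v xk k = 0\<^sub>v n" for k
  proof (induction k)
    case 0
    have "xk 0 = x" using x by (auto simp: xk_def)
    then show ?case using Qx by simp
  next
    case (Suc k)
    have "xk (Suc k) = ?L *\<^sub>v xk k"
      unfolding diag_stdE_mult_vec[OF N xkc] by (auto simp: xk_def)
    then have "?Q *\<^sub>v xk (Suc k) = (?Q * ?L) *\<^sub>v xk k" using assoc_mult_mat_vec[OF Q L xkc] by simp
    also have "?Q * ?L = E * ?Q" using G_E[OF N E D U ED EU] by simp
    also have "(E * ?Q) *\<^sub>v xk k = E *\<^sub>v (?Q *\<^sub>v xk k)" using assoc_mult_mat_vec[OF E Q xkc] .
    finally show ?case using Suc E mult_mat_vec_zero[OF E] by simp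
  qed
  show ?thesis
  proof (rule eq_vecI)
    fix j assume "j < dim_vec (0\<^sub>v (r*N) :: complex vec)"
    then have j: "j < r * N" by simp
    let ?m = "j mod N" and ?c = "j div N"
    have m: "?m < N" using N by simp
    have cr: "?c < r" using j by (simp add: less_mult_imp_div_less)
    define z where "z = vec r (\<lambda>c. x $ (c * N + ?m))"
    have zc: "z \<in> carrier_vec r" by (simp add: z_def)
    have DmU: "D ^\<^sub>m ?m * U \<in> carrier_mat n r" using mult_carrier_mat[OF pow_carrier_mat[OF D] U] .
    have Wz: "(D ^\<^sub>m ?m * U) *\<^sub>v z = 0\<^sub>v n"
    proof (rule eq_vecI)
      fix i assume "i < dim_vec (0\<^sub>v n :: complex vec)"
      then have i: "i < n" by simp
      let ?cf = "\<lambda>k. inverse ((a^2 * omega N ^ ?m) ^ k)"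
      have "0 = (\<Sum>k<N. ?cf k * (?Q *\<^sub>v xk k) $ i)" using Qxk i by simp
      also have "\<dots> = (\<Sum>k<N. ?cf k * (\<Sum>l<r*N. ?Q $$ (i,l) * xk k $ l))"
        using mat_vec_index[OF Q xkc i] by simp
      also have "\<dots> = (\<Sum>k<N. \<Sum>l<r*N. ?Q $$ (i,l) * x $ l * (?cf k * (a^2 * omega N ^ (l mod N)) ^ k))"
        by (rule sum.cong[OF refl]) (auto simp: sum_distrib_left xk_def mult_ac intro!: sum.cong)
      also have "\<dots> = (\<Sum>l<r*N. ?Q $$ (i,l) * x $ l * (\<Sum>k<N. ?cf k * (a^2 * omega N ^ (l mod N)) ^ k))"
        by (subst sum.swap) (simp add: sum_distrib_left)
      also have "\<dots> = (\<Sum>l<r*N. ?Q $$ (i,l) * x $ l * (if l mod N = ?m then of_nat N else 0))"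
        by (rule sum.cong[OF refl]) (use N a m in \<open>simp add: char_sum\<close>)
      also have "\<dots> = (\<Sum>c<r. \<Sum>p<N. ?Q $$ (i,c*N+p) * x $ (c*N+p) * (if p = ?m then of_nat N else 0))"
        by (subst sum_div_mod) (rule sum.cong[OF refl], rule sum.cong[OF refl], simp)
      also have "\<dots> = (\<Sum>c<r. ?Q $$ (i,c*N+?m) * x $ (c*N+?m) * of_nat N)"
        using m by (simp add: if_distrib cong: if_cong)
      also have "\<dots> = of_nat N * inverse (t ^ ?m) * (\<Sum>c<r. (D ^\<^sub>m ?m * U) $$ (i,c) * z $ c)"
      proof -
        have "\<And>c. c < r \<Longrightarrow> ?Q $$ (i,c*N+?m) = inverse (t ^ ?m) * (D ^\<^sub>m ?m * U) $$ (i,c)"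
        proof -
          fix c assume c: "c < r"
          have cm: "c * N + ?m < r * N"
          proof -
            have "c * N + ?m < c * N + N" using m by simp
            also have "\<dots> = Suc c * N" by simp
            also have "\<dots> \<le> r * N" using c by (intro mult_le_mono1) simp
            finally show ?thesis .
          qed
          show "?Q $$ (i,c*N+?m) = inverse (t ^ ?m) * (D ^\<^sub>m ?m * U) $$ (i,c)"
          proof -
            have "?Q $$ (i,c*N+?m) = (inverse (t ^ ?m) \<cdot>\<^sub>m (D ^\<^sub>m ?m * U)) $$ (i, c)"
              using i cm m c by (simp add: Qmat_def)
            also have "\<dots> = inverse (t ^ ?m) * (D ^\<^sub>m ?m * U) $$ (i,c)"
              using DmU i c by (intro index_smult_mat(1)) auto
            finally show ?thesis .
          qed
        qed
        then have "\<And>c. c \<in> {..<r} \<Longrightarrow> ?Q $$ (i,c*N+?m) * x $ (c*N+?m) * of_nat N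
            = of_nat N * inverse (t ^ ?m) * ((D ^\<^sub>m ?m * U) $$ (i,c) * z $ c)"
          by (simp add: z_def)
        then have "(\<Sum>c<r. ?Q $$ (i,c*N+?m) * x $ (c*N+?m) * of_nat N)
            = (\<Sum>c<r. of_nat N * inverse (t ^ ?m) * ((D ^\<^sub>m ?m * U) $$ (i,c) * z $ c))"
          by (rule sum.cong[OF refl])
        then show ?thesis by (simp add: sum_distrib_left)
      qed
      also have "(\<Sum>c<r. (D ^\<^sub>m ?m * U) $$ (i,c) * z $ c) = ((D ^\<^sub>m ?m * U) *\<^sub>v z) $ i"
        using mat_vec_index[OF DmU zc i] by simp
      finally have "0 = of_nat N * inverse (t ^ ?m) * ((D ^\<^sub>m ?m * U) *\<^sub>v z) $ i" .
      then show "((D ^\<^sub>m ?m * U) *\<^sub>v z) $ i = 0\<^sub>v n $ i" using N t i by simp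
    qed (use DmU D in simp)
    have Uz: "U *\<^sub>v z \<in> carrier_vec n" using U zc by simp
    have "D ^\<^sub>m N *\<^sub>v (U *\<^sub>v z) = 0\<^sub>v n"
    proof -
      have NN: "N = (N - ?m) + ?m" using m by simp
      have "D ^\<^sub>m N = D ^\<^sub>m (N - ?m) * D ^\<^sub>m ?m" using pow_mat_add[OF D, of "N - ?m" ?m] NN by simp
      then have "D ^\<^sub>m N *\<^sub>v (U *\<^sub>v z) = D ^\<^sub>m (N - ?m) *\<^sub>v (D ^\<^sub>m ?m *\<^sub>v (U *\<^sub>v z))"
        using assoc_mult_mat_vec[OF pow_carrier_mat[OF D] pow_carrier_mat[OF D] Uz] by simp
      also have "D ^\<^sub>m ?m *\<^sub>v (U *\<^sub>v z) = (D ^\<^sub>m ?m * U) *\<^sub>v z"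
        using assoc_mult_mat_vec[OF pow_carrier_mat[OF D] U zc] by simp
      finally show ?thesis using Wz D mult_mat_vec_zero[OF pow_carrier_mat[OF D]] by simp
    qed
    moreover have "D ^\<^sub>m N *\<^sub>v (U *\<^sub>v z) = (t ^ N) \<cdot>\<^sub>v (U *\<^sub>v z)"
      using assoc_mult_mat_vec[OF pow_carrier_mat[OF D] U zc, symmetric] DU U zc
      by (simp add: smult_mat_mult_vec)
    ultimately have "(t ^ N) \<cdot>\<^sub>v (U *\<^sub>v z) = 0\<^sub>v n" by simp
    then have "U *\<^sub>v z = 0\<^sub>v n" using t Uz smult_vec_zero_cancel[of "t ^ N" "U *\<^sub>v z" n] by simp
    then have "z = 0\<^sub>v r" using Uinj zc by simp
    then have "z $ ?c = 0" using cr by simp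
    then show "x $ j = 0\<^sub>v (r*N) $ j" using cr j by (simp add: z_def add.commute)
  qed (use x in simp)
qed


lemma invertible_obtain: assumes "invertible_mat P" "P \<in> carrier_mat n n"
  obtains B where "B \<in> carrier_mat n n" "P * B = 1\<^sub>m n" "B * P = 1\<^sub>m n"
proof -
  from assms obtain B where PB: "P * B = 1\<^sub>m (dim_row P)" and BP: "B * P = 1\<^sub>m (dim_row B)"
    unfolding invertible_mat_def inverts_mat_def by blast
  have "dim_col B = n" using arg_cong[OF PB, of dim_col] assms(2) by simp
  moreover have "dim_row B = n" using arg_cong[OF BP, of dim_col] assms(2) by simp
  ultimately have B: "B \<in> carrier_mat n n" by auto
  show ?thesis using that[OF B] PB BP assms(2) B by simp
qed

lemma invertible_intro: assumes "P \<in> carrier_mat n n" "B \<in> carrier_mat n n" "P * B = 1\<^sub>m n" "B * P = 1\<^sub>m n"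
  shows "invertible_mat P"
  using assms unfolding invertible_mat_def inverts_mat_def square_mat.simps by auto

lemma inj_square_invertible: assumes Q: "(Q::complex mat) \<in> carrier_mat n n"
  and inj: "\<And>x. x \<in> carrier_vec n \<Longrightarrow> Q *\<^sub>v x = 0\<^sub>v n \<Longrightarrow> x = 0\<^sub>v n"
  shows "invertible_mat Q"
proof -
  have "det Q \<noteq> 0" using det_0_iff_vec_prod_zero[OF Q] inj by blast
  from det_non_zero_imp_unit[OF Q this, of undefined]
  obtain B where "B \<in> carrier_mat n n" "B * Q = 1\<^sub>m n" "Q * B = 1\<^sub>m n"
    unfolding Units_def ring_mat_def by auto
  then show ?thesis using invertible_intro[OF Q] by blast
qed

lemma mult_cancel_left: assumes "B \<in> carrier_mat n n" "P \<in> carrier_mat n n" "B * P = 1\<^sub>m n" "Y \<in> carrier_mat n k"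
  shows "B * (P * Y) = (Y :: complex mat)"
proof -
  have "B * (P * Y) = (B * P) * Y" using assoc_mult_mat[OF assms(1,2,4)] by simp
  also have "\<dots> = Y" unfolding assms(3) using assms(4) by simp
  finally show ?thesis .
qed

lemma equiv_sym: assumes E: "E \<in> carrier_mat n n" and D: "D \<in> carrier_mat n n"
  and E': "E' \<in> carrier_mat n n" and D': "D' \<in> carrier_mat n n"
  and eq: "equiv_rep n E D n E' D'"
  shows "equiv_rep n E' D' n E D"
proof -
  from eq obtain P where P: "P \<in> carrier_mat n n" "invertible_mat P" "P * E = E' * P" "P * D = D' * P"
    unfolding equiv_rep_def by auto
  obtain B where B: "B \<in> carrier_mat n n" "P * B = 1\<^sub>m n" "B * P = 1\<^sub>m n" using invertible_obtain[OF P(2,1)] .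
  have invB: "invertible_mat B" using invertible_intro[OF B(1) P(1) B(3) B(2)] .
  have conj: "B * X' = X * B" if X: "X \<in> carrier_mat n n" and X': "X' \<in> carrier_mat n n" and PX: "P * X = X' * P" for X X'
  proof -
    have "X' * (P * B) = (X' * P) * B" using assoc_mult_mat[OF X' P(1) B(1)] by simp
    also have "\<dots> = (P * X) * B" using PX by simp
    also have "\<dots> = P * (X * B)" using assoc_mult_mat[OF P(1) X B(1)] by simp
    finally have "X' * (P * B) = P * (X * B)" .
    then have "X' = P * (X * B)" using B X' by simp
    then show "B * X' = X * B" using mult_cancel_left[OF B(1) P(1) B(3), of "X * B" n] B X by simp
  qed
  show ?thesis unfolding equiv_rep_def using B(1) invB conj[OF E E' P(3)] conj[OF D D' P(4)] by auto
qed

lemma equiv_trans: assumes A: "A \<in> carrier_mat n n" "B \<in> carrier_mat n n"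
  and A': "A' \<in> carrier_mat n n" "B' \<in> carrier_mat n n"
  and A'': "A'' \<in> carrier_mat n n" "B'' \<in> carrier_mat n n"
  and e1: "equiv_rep n A B n A' B'" and e2: "equiv_rep n A' B' n A'' B''"
  shows "equiv_rep n A B n A'' B''"
proof -
  from e1 obtain P where P: "P \<in> carrier_mat n n" "invertible_mat P" "P * A = A' * P" "P * B = B' * P"
    unfolding equiv_rep_def by auto
  from e2 obtain R where R: "R \<in> carrier_mat n n" "invertible_mat R" "R * A' = A'' * R" "R * B' = B'' * R"
    unfolding equiv_rep_def by auto
  obtain P1 where P1: "P1 \<in> carrier_mat n n" "P * P1 = 1\<^sub>m n" "P1 * P = 1\<^sub>m n" using invertible_obtain[OF P(2,1)] .
  obtain R1 where R1: "R1 \<in> carrier_mat n n" "R * R1 = 1\<^sub>m n" "R1 * R = 1\<^sub>m n" using invertible_obtain[OF R(2,1)] .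
  have PR1: "P1 * R1 \<in> carrier_mat n n" "R * P \<in> carrier_mat n n" using P1 R1 R P by auto
  have "(R * P) * (P1 * R1) = R * (P * (P1 * R1))" using assoc_mult_mat[OF R(1) P(1) PR1(1)] by simp
  then have i1: "(R * P) * (P1 * R1) = 1\<^sub>m n" using mult_cancel_left[OF P(1) P1(1) P1(2) R1(1)] R1(2) by simp
  have "(P1 * R1) * (R * P) = P1 * (R1 * (R * P))" using assoc_mult_mat[OF P1(1) R1(1) PR1(2)] by simp
  then have i2: "(P1 * R1) * (R * P) = 1\<^sub>m n" using mult_cancel_left[OF R1(1) R(1) R1(3) P(1)] P1(3) by simp
  have inv: "invertible_mat (R * P)" using invertible_intro[OF _ _ i1 i2] P R P1 R1 by auto
  have c: "(R * P) * X = X'' * (R * P)" if X: "X \<in> carrier_mat n n" "X' \<in> carrier_mat n n" "X'' \<in> carrier_mat n n"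
    and h1: "P * X = X' * P" and h2: "R * X' = X'' * R" for X X' X''
  proof -
    have "(R * P) * X = R * (P * X)" using R P X by (simp add: assoc_mult_mat[of _ n n _ n _ n])
    also have "\<dots> = (R * X') * P" using R P X h1 by (simp add: assoc_mult_mat[of _ n n _ n _ n])
    also have "\<dots> = X'' * (R * P)" using R P X h2 by (simp add: assoc_mult_mat[of _ n n _ n _ n])
    finally show ?thesis .
  qed
  show ?thesis unfolding equiv_rep_def using inv PR1(2) c[OF A(1) A'(1) A''(1) P(3) R(3)] c[OF A(2) A'(2) A''(2) P(4) R(4)]
    by blast
qed

lemma G_equiv:
  assumes N: "N > 0" and E: "E \<in> carrier_mat (r*N) (r*N)" and D: "D \<in> carrier_mat (r*N) (r*N)"
  and U: "U \<in> carrier_mat (r*N) r"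
  and ED: "E * D = omega N \<cdot>\<^sub>m (D * E)" and EU: "E * U = (a^2) \<cdot>\<^sub>m U"
  and DU: "D ^\<^sub>m N * U = (t ^ N) \<cdot>\<^sub>m U" and a: "a \<noteq> 0" and t: "t \<noteq> 0"
  and Uinj: "\<And>z. z \<in> carrier_vec r \<Longrightarrow> U *\<^sub>v z = 0\<^sub>v (r*N) \<Longrightarrow> z = 0\<^sub>v r"
  shows "equiv_rep (r*N) (diag_copies r (std_E N a (t/a))) (diag_copies r (std_D N a (t/a))) (r*N) E D"
proof -
  let ?Q = "Qmat N (r*N) r t D U"
  have Q: "?Q \<in> carrier_mat (r*N) (r*N)" by (rule Qmat_carrier)
  have inv: "invertible_mat ?Q"
    by (rule inj_square_invertible[OF Q]) (rule G_inj[OF N E D U ED EU DU a t Uinj], auto)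
  show ?thesis unfolding equiv_rep_def
    using Q inv G_E[OF N E D U ED EU, of t "t/a"] G_D[OF N D U DU a t] by auto
qed


lemma stdE_pow: assumes N: "N > 0"
  shows "std_E N a y ^\<^sub>m k = mat N N (\<lambda>(i,j). if i = j then (a^2 * omega N ^ i) ^ k else 0)"
proof (induction k)
  case 0 then show ?case by (auto simp: mat_eq_iff)
next
  case (Suc k)
  show ?case
  proof (rule eq_matI)
    fix i j assume "i < dim_row (mat N N (\<lambda>(i,j). if i = j then (a^2 * omega N ^ i) ^ Suc k else (0::complex)))"
      "j < dim_col (mat N N (\<lambda>(i,j). if i = j then (a^2 * omega N ^ i) ^ Suc k else (0::complex)))"
    then have i: "i < N" and j: "j < N" by auto
    have "(std_E N a y ^\<^sub>m Suc k) $$ (i,j) = (\<Sum>l<N. (std_E N a y ^\<^sub>m k) $$ (i,l) * std_E N a y $$ (l,j))"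
      by (simp only: pow_mat.simps(2), rule mat_mult_index[OF pow_carrier_mat[OF std_carrier(1)] std_carrier(1) i j])
    also have "\<dots> = (\<Sum>l<N. if l = j then (if i = j then (a^2 * omega N ^ i) ^ Suc k else 0) else 0)"
      by (rule sum.cong[OF refl]) (use i j in \<open>auto simp: Suc\<close>)
    also have "\<dots> = (if i = j then (a^2 * omega N ^ i) ^ Suc k else 0)" using j by simp
    finally show "(std_E N a y ^\<^sub>m Suc k) $$ (i,j) = mat N N (\<lambda>(i,j). if i = j then (a^2 * omega N ^ i) ^ Suc k else 0) $$ (i,j)"
      using i j by simp
  qed auto
qed

lemma stdD_pow: assumes N: "N > 0"
  shows "std_D N a y ^\<^sub>m k = mat N N (\<lambda>(i,j). if i = (j + k) mod N then (a * y) ^ k else 0)"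
proof (induction k)
  case 0 then show ?case by (auto simp: mat_eq_iff)
next
  case (Suc k)
  show ?case
  proof (rule eq_matI)
    fix i j assume "i < dim_row (mat N N (\<lambda>(i,j). if i = (j + Suc k) mod N then (a * y) ^ Suc k else (0::complex)))"
      "j < dim_col (mat N N (\<lambda>(i,j). if i = (j + Suc k) mod N then (a * y) ^ Suc k else (0::complex)))"
    then have i: "i < N" and j: "j < N" by auto
    have jm: "(j + 1) mod N < N" using N by simp
    have e: "((j + 1) mod N + k) mod N = (j + Suc k) mod N" by (simp add: mod_add_left_eq)
    have "(std_D N a y ^\<^sub>m Suc k) $$ (i,j) = (\<Sum>l<N. (std_D N a y ^\<^sub>m k) $$ (i,l) * std_D N a y $$ (l,j))"
      by (simp only: pow_mat.simps(2), rule mat_mult_index[OF pow_carrier_mat[OF std_carrier(2)] std_carrier(2) i j])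
    also have "\<dots> = (\<Sum>l<N. if l = (j + 1) mod N then (if i = (j + Suc k) mod N then (a * y) ^ Suc k else 0) else 0)"
      by (rule sum.cong[OF refl]) (use i j e in \<open>auto simp: Suc\<close>)
    also have "\<dots> = (if i = (j + Suc k) mod N then (a * y) ^ Suc k else 0)" using jm by simp
    finally show "(std_D N a y ^\<^sub>m Suc k) $$ (i,j) = mat N N (\<lambda>(i,j). if i = (j + Suc k) mod N then (a * y) ^ Suc k else 0) $$ (i,j)"
      using i j by simp
  qed auto
qed

lemma stdE_pow_N: assumes N: "N > 0" shows "std_E N a y ^\<^sub>m N = (a ^ (2 * N)) \<cdot>\<^sub>m 1\<^sub>m N"
proof -
  have "(a^2 * omega N ^ i) ^ N = a ^ (2 * N)" for i
  proof -
    have "(omega N ^ i) ^ N = (omega N ^ N) ^ i" by (metis mult.commute power_mult)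
    then show ?thesis using omega_N[OF N] by (simp add: power_mult_distrib power_mult)
  qed
  then show ?thesis unfolding stdE_pow[OF N] by (auto simp: mat_eq_iff)
qed

lemma stdD_pow_N: assumes N: "N > 0" shows "std_D N a y ^\<^sub>m N = ((a * y) ^ N) \<cdot>\<^sub>m 1\<^sub>m N"
  unfolding stdD_pow[OF N] by (auto simp: mat_eq_iff)

lemma stdED: assumes N: "N > 0"
  shows "std_E N a y * std_D N a y = omega N \<cdot>\<^sub>m (std_D N a y * std_E N a y)"
proof (rule eq_matI)
  fix i j assume "i < dim_row (omega N \<cdot>\<^sub>m (std_D N a y * std_E N a y))" "j < dim_col (omega N \<cdot>\<^sub>m (std_D N a y * std_E N a y))"
  then have i: "i < N" and j: "j < N" by auto
  have jm: "(j + 1) mod N < N" using N by simp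
  have w: "omega N ^ ((j + 1) mod N) = omega N * omega N ^ j" using omega_mod[OF N, of "j+1"] by simp
  have "(std_E N a y * std_D N a y) $$ (i,j) = (\<Sum>l<N. std_E N a y $$ (i,l) * std_D N a y $$ (l,j))"
    by (rule mat_mult_index[OF std_carrier(1) std_carrier(2) i j])
  also have "\<dots> = (\<Sum>l<N. if l = i then (if i = (j + 1) mod N then a^2 * omega N ^ i * (a * y) else 0) else 0)"
    by (rule sum.cong[OF refl]) (use i j in auto)
  also have "\<dots> = (if i = (j + 1) mod N then a^2 * omega N ^ i * (a * y) else 0)" using i by simp
  finally have l: "(std_E N a y * std_D N a y) $$ (i,j) = (if i = (j + 1) mod N then a^2 * omega N ^ i * (a * y) else 0)" .
  have "(std_D N a y * std_E N a y) $$ (i,j) = (\<Sum>l<N. std_D N a y $$ (i,l) * std_E N a y $$ (l,j))"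
    by (rule mat_mult_index[OF std_carrier(2) std_carrier(1) i j])
  also have "\<dots> = (\<Sum>l<N. if l = j then (if i = (j + 1) mod N then (a * y) * (a^2 * omega N ^ j) else 0) else 0)"
    by (rule sum.cong[OF refl]) (use i j in auto)
  also have "\<dots> = (if i = (j + 1) mod N then (a * y) * (a^2 * omega N ^ j) else 0)" using j by simp
  finally have r: "(std_D N a y * std_E N a y) $$ (i,j) = (if i = (j + 1) mod N then (a * y) * (a^2 * omega N ^ j) else 0)" .
  show "(std_E N a y * std_D N a y) $$ (i,j) = (omega N \<cdot>\<^sub>m (std_D N a y * std_E N a y)) $$ (i,j)"
    using i j l r w by auto
qed auto

lemma pow_invertible: assumes N: "N > 0" and M: "(M::complex mat) \<in> carrier_mat n n"
  and MN: "M ^\<^sub>m N = c \<cdot>\<^sub>m 1\<^sub>m n" and c: "c \<noteq> 0"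
  shows "invertible_mat M"
proof -
  let ?B = "inverse c \<cdot>\<^sub>m M ^\<^sub>m (N - 1)"
  have B: "?B \<in> carrier_mat n n" using M by simp
  have NN: "N = Suc (N - 1)" using N by simp
  have e1: "M * M ^\<^sub>m (N - 1) = M ^\<^sub>m N" using pow_mat_Suc_left[OF M, of "N - 1"] NN by simp
  have e2: "M ^\<^sub>m (N - 1) * M = M ^\<^sub>m N" using NN by (metis pow_mat.simps(2))
  have "M * ?B = inverse c \<cdot>\<^sub>m (M * M ^\<^sub>m (N - 1))" by (rule mult_smult_distrib) (use M in auto)
  also have "\<dots> = 1\<^sub>m n" unfolding e1 MN using c by (auto simp: mat_eq_iff)
  finally have i1: "M * ?B = 1\<^sub>m n" .
  have "?B * M = inverse c \<cdot>\<^sub>m (M ^\<^sub>m (N - 1) * M)" by (rule mult_smult_assoc_mat) (use M in auto)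
  also have "\<dots> = 1\<^sub>m n" unfolding e2 MN using c by (auto simp: mat_eq_iff)
  finally have i2: "?B * M = 1\<^sub>m n" .
  show ?thesis by (rule invertible_intro[OF M B i1 i2])
qed

lemma std_cyclic_rep: assumes N: "N > 0" and a: "a \<noteq> 0" and y: "y \<noteq> 0"
  shows "cyclic_rep N N (std_E N a y) (std_D N a y)"
proof -
  have iE: "invertible_mat (std_E N a y)"
    by (rule pow_invertible[OF N std_carrier(1) stdE_pow_N[OF N]]) (use a in simp)
  have iD: "invertible_mat (std_D N a y)"
    by (rule pow_invertible[OF N std_carrier(2) stdD_pow_N[OF N]]) (use a y in simp)
  show ?thesis unfolding cyclic_rep_def is_rep_def using iE iD stdED[OF N] by auto
qed


lemma scalar_conj: assumes N: "N > 0" and P: "P \<in> carrier_mat N N" and iP: "invertible_mat P"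
  and e: "P * ((c1::complex) \<cdot>\<^sub>m 1\<^sub>m N) = (c2 \<cdot>\<^sub>m 1\<^sub>m N) * P"
  shows "c1 = c2"
proof -
  obtain B where B: "B \<in> carrier_mat N N" "P * B = 1\<^sub>m N" "B * P = 1\<^sub>m N" using invertible_obtain[OF iP P] .
  have "P * (c1 \<cdot>\<^sub>m 1\<^sub>m N) = c1 \<cdot>\<^sub>m (P * 1\<^sub>m N)" by (rule mult_smult_distrib[OF P one_carrier_mat])
  then have "P * (c1 \<cdot>\<^sub>m 1\<^sub>m N) = c1 \<cdot>\<^sub>m P" using P by simp
  moreover have "(c2 \<cdot>\<^sub>m 1\<^sub>m N) * P = c2 \<cdot>\<^sub>m (1\<^sub>m N * P)" by (rule mult_smult_assoc_mat[OF one_carrier_mat P])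
  then have "(c2 \<cdot>\<^sub>m 1\<^sub>m N) * P = c2 \<cdot>\<^sub>m P" using P by simp
  ultimately have "c1 \<cdot>\<^sub>m P = c2 \<cdot>\<^sub>m P" using e by simp
  then have "(c1 \<cdot>\<^sub>m P) * B = (c2 \<cdot>\<^sub>m P) * B" by simp
  then have "c1 \<cdot>\<^sub>m (P * B) = c2 \<cdot>\<^sub>m (P * B)" using P B by (simp add: mult_smult_assoc_mat[OF P B(1)])
  then have "c1 \<cdot>\<^sub>m 1\<^sub>m N = c2 \<cdot>\<^sub>m 1\<^sub>m N" using B by simp
  then have "(c1 \<cdot>\<^sub>m 1\<^sub>m N) $$ (0,0) = (c2 \<cdot>\<^sub>m 1\<^sub>m N) $$ (0,0)" by simp
  then show ?thesis using N by simp
qed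

definition ucol :: "nat \<Rightarrow> nat \<Rightarrow> complex mat" where
  "ucol n j = mat n 1 (\<lambda>(i,_). if i = j then 1 else 0)"

lemma ucol_carrier[simp]: "ucol n j \<in> carrier_mat n 1" by (simp add: ucol_def)

lemma mult_ucol: assumes M: "M \<in> carrier_mat m n" and j: "j < n"
  shows "M * ucol n j = mat m 1 (\<lambda>(i,_). M $$ (i,j))"
proof (rule eq_matI)
  fix i k assume "i < dim_row (mat m 1 (\<lambda>(i,_). M $$ (i,j)))" "k < dim_col (mat m 1 (\<lambda>(i,_). M $$ (i,j)))"
  then have i: "i < m" and k: "k = 0" by auto
  have "(M * ucol n j) $$ (i,k) = (\<Sum>l<n. M $$ (i,l) * ucol n j $$ (l,k))"
    by (rule mat_mult_index[OF M ucol_carrier i]) (simp add: k)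
  also have "\<dots> = (\<Sum>l<n. if l = j then M $$ (i,j) else 0)"
    by (rule sum.cong[OF refl]) (auto simp: ucol_def k)
  also have "\<dots> = M $$ (i,j)" using j by simp
  finally show "(M * ucol n j) $$ (i,k) = mat m 1 (\<lambda>(i,_). M $$ (i,j)) $$ (i,k)" using i k by simp
qed (use M in \<open>auto simp: ucol_def\<close>)

lemma ucol_inj: assumes j: "j < n" and z: "z \<in> carrier_vec 1" and Uz: "ucol n j *\<^sub>v z = 0\<^sub>v n"
  shows "z = 0\<^sub>v 1"
proof -
  have "(ucol n j *\<^sub>v z) $ j = (\<Sum>l<1. ucol n j $$ (j,l) * z $ l)"
    by (rule mat_vec_index[OF ucol_carrier z j])
  also have "\<dots> = z $ 0" using j by (simp add: ucol_def)
  finally have "z $ 0 = 0" using Uz j by simp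
  then show ?thesis using z by (auto simp: vec_eq_iff)
qed

lemma std_equiv_iff: assumes N: "N > 0" and a1: "a1 \<noteq> 0" and y1: "y1 \<noteq> 0" and a2: "a2 \<noteq> 0" and y2: "y2 \<noteq> 0"
  shows "equiv_rep N (std_E N a1 y1) (std_D N a1 y1) N (std_E N a2 y2) (std_D N a2 y2)
     \<longleftrightarrow> a1 ^ (2 * N) = a2 ^ (2 * N) \<and> a1 ^ N * y1 ^ N = a2 ^ N * y2 ^ N"
proof
  assume "equiv_rep N (std_E N a1 y1) (std_D N a1 y1) N (std_E N a2 y2) (std_D N a2 y2)"
  then obtain P where P: "P \<in> carrier_mat N N" "invertible_mat P"
    "P * std_E N a1 y1 = std_E N a2 y2 * P" "P * std_D N a1 y1 = std_D N a2 y2 * P"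
    unfolding equiv_rep_def by auto
  have "P * std_E N a1 y1 ^\<^sub>m N = std_E N a2 y2 ^\<^sub>m N * P"
    by (rule pow_mat_intertw[OF P(1) std_carrier(1) std_carrier(1) P(3)])
  then have "a1 ^ (2 * N) = a2 ^ (2 * N)"
    unfolding stdE_pow_N[OF N] by (rule scalar_conj[OF N P(1,2)])
  moreover have "P * std_D N a1 y1 ^\<^sub>m N = std_D N a2 y2 ^\<^sub>m N * P"
    by (rule pow_mat_intertw[OF P(1) std_carrier(2) std_carrier(2) P(4)])
  then have "(a1 * y1) ^ N = (a2 * y2) ^ N"
    unfolding stdD_pow_N[OF N] by (rule scalar_conj[OF N P(1,2)])
  ultimately show "a1 ^ (2 * N) = a2 ^ (2 * N) \<and> a1 ^ N * y1 ^ N = a2 ^ N * y2 ^ N"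
    by (simp add: power_mult_distrib)
next
  assume h: "a1 ^ (2 * N) = a2 ^ (2 * N) \<and> a1 ^ N * y1 ^ N = a2 ^ N * y2 ^ N"
  have "(a1^2 / a2^2) ^ N = 1" using h a2 by (simp add: power_divide power_mult[symmetric])
  then obtain j where j: "j < N" "a1^2 / a2^2 = omega N ^ j" using roots_unity_omega[OF N] by blast
  then have a12: "a1^2 = a2^2 * omega N ^ j" using a2 by (simp add: field_simps)
  let ?U = "ucol N j"
  let ?t = "a1 * y1"
  have EU: "std_E N a2 y2 * ?U = (a1^2) \<cdot>\<^sub>m ?U"
    unfolding mult_ucol[OF std_carrier(1) j(1)] using j a12 by (auto simp: mat_eq_iff ucol_def)
  have DU: "std_D N a2 y2 ^\<^sub>m N * ?U = (?t ^ N) \<cdot>\<^sub>m ?U"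
  proof -
    have "std_D N a2 y2 ^\<^sub>m N * ?U = ((a2 * y2) ^ N) \<cdot>\<^sub>m (1\<^sub>m N * ?U)"
      unfolding stdD_pow_N[OF N] by (rule mult_smult_assoc_mat[OF _ ucol_carrier]) auto
    also have "(a2 * y2) ^ N = ?t ^ N" using h by (simp add: power_mult_distrib)
    finally show ?thesis using left_mult_one_mat[OF ucol_carrier[of N j]] by simp
  qed
  have "equiv_rep (1*N) (diag_copies 1 (std_E N a1 (?t/a1))) (diag_copies 1 (std_D N a1 (?t/a1))) (1*N)
     (std_E N a2 y2) (std_D N a2 y2)"
    by (rule G_equiv[OF N _ _ _ stdED[OF N] EU DU a1]) (use a1 y1 j ucol_inj ucol_carrier[of N j, simplified] in auto)
  then show "equiv_rep N (std_E N a1 y1) (std_D N a1 y1) N (std_E N a2 y2) (std_D N a2 y2)"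
    using a1 diag_copies_1[OF std_carrier(1), of N a1 y1] diag_copies_1[OF std_carrier(2), of N a1 y1] by simp
qed


section \<open>Irreducibility of standard representations\<close>

fun vsum :: "nat \<Rightarrow> (nat \<Rightarrow> complex vec) \<Rightarrow> nat \<Rightarrow> complex vec" where
  "vsum n f 0 = 0\<^sub>v n"
| "vsum n f (Suc k) = vsum n f k + f k"

lemma vsum_carrier: "(\<And>k. k < K \<Longrightarrow> f k \<in> carrier_vec n) \<Longrightarrow> vsum n f K \<in> carrier_vec n"
  by (induction K) auto

lemma vsum_index: "(\<And>k. k < K \<Longrightarrow> f k \<in> carrier_vec n) \<Longrightarrow> i < n \<Longrightarrow> vsum n f K $ i = (\<Sum>k<K. f k $ i)"
proof (induction K)
  case (Suc K)
  have c: "vsum n f K \<in> carrier_vec n" using Suc.prems by (intro vsum_carrier) auto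
  have "f K \<in> carrier_vec n" using Suc.prems by auto
  then have d: "dim_vec (f K) = n" by auto
  have "(vsum n f K + f K) $ i = vsum n f K $ i + f K $ i" by (rule index_add_vec(1)) (simp add: d Suc.prems)
  then show ?case using Suc by simp
qed simp

lemma vsum_W: assumes W: "subspace_vec n W" shows "(\<And>k. k < K \<Longrightarrow> f k \<in> W) \<Longrightarrow> vsum n f K \<in> W"
  using W by (induction K) (auto simp: subspace_vec_def)

lemma std_irreducible: assumes N: "N > 0" and a: "a \<noteq> 0" and y: "y \<noteq> 0"
  shows "irreducible_rep N N (std_E N a y) (std_D N a y)"
proof -
  let ?S = "std_E N a y" and ?T = "std_D N a y"
  have rep: "is_rep N N ?S ?T" using std_cyclic_rep[OF N a y] unfolding cyclic_rep_def by simp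
  have main: "W = carrier_vec N" if inv: "invariant_subspace N ?S ?T W" and ne: "W \<noteq> {0\<^sub>v N}" for W
  proof -
    have sub: "subspace_vec N W" and SW: "\<And>v. v \<in> W \<Longrightarrow> ?S *\<^sub>v v \<in> W" and TW: "\<And>v. v \<in> W \<Longrightarrow> ?T *\<^sub>v v \<in> W"
      using inv unfolding invariant_subspace_def by auto
    have Wc: "W \<subseteq> carrier_vec N" and W0: "0\<^sub>v N \<in> W"
      and Wadd: "\<And>v w. v \<in> W \<Longrightarrow> w \<in> W \<Longrightarrow> v + w \<in> W" and Wsm: "\<And>c v. v \<in> W \<Longrightarrow> c \<cdot>\<^sub>v v \<in> W"
      using sub unfolding subspace_vec_def by auto
    obtain v where v: "v \<in> W" "v \<noteq> 0\<^sub>v N" using ne W0 by blast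
    have vc: "v \<in> carrier_vec N" using v Wc by auto
    obtain m where m: "m < N" "v $ m \<noteq> 0"
    proof -
      have "\<exists>m<N. v $ m \<noteq> 0"
      proof (rule ccontr)
        assume "\<not> ?thesis"
        then have "v = 0\<^sub>v N" using vc by (auto simp: vec_eq_iff)
        then show False using v by simp
      qed
      then show ?thesis using that by blast
    qed
    have SkW: "?S ^\<^sub>m k *\<^sub>v v \<in> W" for k
    proof (induction k)
      case 0 then show ?case using v vc by simp
    next
      case (Suc k)
      have "?S ^\<^sub>m Suc k *\<^sub>v v = ?S *\<^sub>v (?S ^\<^sub>m k *\<^sub>v v)"
        unfolding pow_mat_Suc_left[OF std_carrier(1)] by (rule assoc_mult_mat_vec[OF std_carrier(1) pow_carrier_mat[OF std_carrier(1)] vc])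
      then show ?case using SW[OF Suc] by simp
    qed
    have Sk_index: "(?S ^\<^sub>m k *\<^sub>v v) $ i = (a^2 * omega N ^ i) ^ k * v $ i" if i: "i < N" for k i
    proof -
      have "(?S ^\<^sub>m k *\<^sub>v v) $ i = (\<Sum>l<N. (?S ^\<^sub>m k) $$ (i,l) * v $ l)"
        by (rule mat_vec_index[OF pow_carrier_mat[OF std_carrier(1)] vc i])
      also have "\<dots> = (\<Sum>l<N. if l = i then (a^2 * omega N ^ i) ^ k * v $ i else 0)"
        by (rule sum.cong[OF refl]) (use i in \<open>auto simp: stdE_pow[OF N]\<close>)
      also have "\<dots> = (a^2 * omega N ^ i) ^ k * v $ i" using i by simp
      finally show ?thesis .
    qed
    define p where "p = vsum N (\<lambda>k. inverse ((a^2 * omega N ^ m) ^ k) \<cdot>\<^sub>v (?S ^\<^sub>m k *\<^sub>v v)) N"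
    have fc: "\<And>k. inverse ((a^2 * omega N ^ m) ^ k) \<cdot>\<^sub>v (?S ^\<^sub>m k *\<^sub>v v) \<in> carrier_vec N"
      using mult_mat_vec_carrier[OF pow_carrier_mat[OF std_carrier(1)] vc] by simp
    have pW: "p \<in> W" unfolding p_def by (rule vsum_W[OF sub]) (rule Wsm[OF SkW])
    have pc: "p \<in> carrier_vec N" unfolding p_def by (rule vsum_carrier) (rule fc)
    have p_eq: "p = (of_nat N * v $ m) \<cdot>\<^sub>v unit_vec N m"
    proof (rule eq_vecI)
      fix i assume "i < dim_vec ((of_nat N * v $ m) \<cdot>\<^sub>v unit_vec N m)"
      then have i: "i < N" by simp
      have "p $ i = (\<Sum>k<N. (inverse ((a^2 * omega N ^ m) ^ k) \<cdot>\<^sub>v (?S ^\<^sub>m k *\<^sub>v v)) $ i)"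
        unfolding p_def by (rule vsum_index[OF fc i])
      also have "\<dots> = (\<Sum>k<N. inverse ((a^2 * omega N ^ m) ^ k) * (a^2 * omega N ^ i) ^ k) * v $ i"
        using i Sk_index[OF i] by (simp add: sum_distrib_right mult.assoc)
      also have "\<dots> = (if i = m then of_nat N else 0) * v $ i" using char_sum[OF N a i m(1)] by simp
      finally show "p $ i = ((of_nat N * v $ m) \<cdot>\<^sub>v unit_vec N m) $ i" using i m by auto
    qed (use pc in auto)
    have umW: "unit_vec N m \<in> W"
    proof -
      have "inverse (of_nat N * v $ m) \<cdot>\<^sub>v p \<in> W" using Wsm[OF pW] .
      moreover have "inverse (of_nat N * v $ m) \<cdot>\<^sub>v p = unit_vec N m"
        unfolding p_eq using N m by (auto simp: vec_eq_iff field_simps)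
      ultimately show ?thesis by simp
    qed
    have TkW: "?T ^\<^sub>m k *\<^sub>v unit_vec N m \<in> W" for k
    proof (induction k)
      case 0 then show ?case using umW by simp
    next
      case (Suc k)
      have "?T ^\<^sub>m Suc k *\<^sub>v unit_vec N m = ?T *\<^sub>v (?T ^\<^sub>m k *\<^sub>v unit_vec N m)"
        unfolding pow_mat_Suc_left[OF std_carrier(2)] by (rule assoc_mult_mat_vec[OF std_carrier(2) pow_carrier_mat[OF std_carrier(2)]]) simp
      then show ?case using TW[OF Suc] by simp
    qed
    have ujW: "unit_vec N j \<in> W" if j: "j < N" for j
    proof -
      let ?k = "j + N - m"
      have jk: "(m + ?k) mod N = j" using j m by simp
      have "?T ^\<^sub>m ?k *\<^sub>v unit_vec N m = ((a * y) ^ ?k) \<cdot>\<^sub>v unit_vec N j"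
      proof (rule eq_vecI)
        fix i assume "i < dim_vec (((a * y) ^ ?k) \<cdot>\<^sub>v unit_vec N j)"
        then have i: "i < N" by simp
        have "(?T ^\<^sub>m ?k *\<^sub>v unit_vec N m) $ i = (\<Sum>l<N. (?T ^\<^sub>m ?k) $$ (i,l) * unit_vec N m $ l)"
          by (rule mat_vec_index[OF pow_carrier_mat[OF std_carrier(2)] _ i]) simp
        also have "\<dots> = (\<Sum>l<N. if l = m then (if i = j then (a * y) ^ ?k else 0) else 0)"
          by (rule sum.cong[OF refl]) (use i jk m(1) in \<open>auto simp: stdD_pow[OF N]\<close>)
        also have "\<dots> = (if i = j then (a * y) ^ ?k else 0)" using m by simp
        finally show "(?T ^\<^sub>m ?k *\<^sub>v unit_vec N m) $ i = (((a * y) ^ ?k) \<cdot>\<^sub>v unit_vec N j) $ i" using i j by simp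
      qed simp
      then have "((a * y) ^ ?k) \<cdot>\<^sub>v unit_vec N j \<in> W" using TkW[of ?k] by simp
      then have "inverse ((a * y) ^ ?k) \<cdot>\<^sub>v (((a * y) ^ ?k) \<cdot>\<^sub>v unit_vec N j) \<in> W" by (rule Wsm)
      then show ?thesis using a y by (simp add: smult_smult_assoc)
    qed
    show ?thesis
    proof
      show "W \<subseteq> carrier_vec N" by (rule Wc)
      show "carrier_vec N \<subseteq> W"
      proof
        fix w :: "complex vec" assume w: "w \<in> carrier_vec N"
        have fc2: "\<And>j. (w $ j) \<cdot>\<^sub>v unit_vec N j \<in> carrier_vec N" by simp
        have "vsum N (\<lambda>j. (w $ j) \<cdot>\<^sub>v unit_vec N j) N \<in> W"
          by (rule vsum_W[OF sub]) (rule Wsm[OF ujW], simp)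
        moreover have "vsum N (\<lambda>j. (w $ j) \<cdot>\<^sub>v unit_vec N j) N = w"
        proof (rule eq_vecI)
          fix i assume "i < dim_vec w"
          then have i: "i < N" using w by simp
          show "vsum N (\<lambda>j. (w $ j) \<cdot>\<^sub>v unit_vec N j) N $ i = w $ i"
            unfolding vsum_index[OF fc2 i] using i by (simp add: mult.commute[of _ "if _ then _ else _"] if_distrib cong: if_cong)
        qed (use w vsum_carrier[OF fc2] in auto)
        ultimately show "w \<in> W" by simp
      qed
    qed
  qed
  show ?thesis unfolding irreducible_rep_def using rep N main by blast
qed


section \<open>Classification of irreducible cyclic representations\<close>

lemma subspace_vec_eigen: assumes M: "(M::complex mat) \<in> carrier_mat n n"
  shows "subspace_vec n {v \<in> carrier_vec n. M *\<^sub>v v = c \<cdot>\<^sub>v v}"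
  unfolding subspace_vec_def
proof (intro conjI ballI allI)
  show "{v \<in> carrier_vec n. M *\<^sub>v v = c \<cdot>\<^sub>v v} \<subseteq> carrier_vec n" by auto
  show "0\<^sub>v n \<in> {v \<in> carrier_vec n. M *\<^sub>v v = c \<cdot>\<^sub>v v}" using mult_mat_vec_zero[OF M] by auto
next
  fix v w assume v: "v \<in> {v \<in> carrier_vec n. M *\<^sub>v v = c \<cdot>\<^sub>v v}" and w: "w \<in> {v \<in> carrier_vec n. M *\<^sub>v v = c \<cdot>\<^sub>v v}"
  then show "v + w \<in> {v \<in> carrier_vec n. M *\<^sub>v v = c \<cdot>\<^sub>v v}"
    using mult_add_distrib_mat_vec[OF M, of v w] by (auto simp: smult_add_distrib_vec)
next
  fix k v assume v: "v \<in> {v \<in> carrier_vec n. M *\<^sub>v v = c \<cdot>\<^sub>v v}"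
  then show "k \<cdot>\<^sub>v v \<in> {v \<in> carrier_vec n. M *\<^sub>v v = c \<cdot>\<^sub>v v}"
    using mult_mat_vec[OF M, of v k] by (auto simp: smult_smult_assoc mult.commute)
qed

lemma schur_scalar:
  assumes irr: "irreducible_rep N n E D" and E: "E \<in> carrier_mat n n" and D: "D \<in> carrier_mat n n"
  and Ei: "Ei \<in> carrier_mat n n" "E * Ei = 1\<^sub>m n" "Ei * E = 1\<^sub>m n"
  and M: "M \<in> carrier_mat n n" and ME: "M * E = E * M" and MD: "M * D = D * M"
  and v0: "v0 \<in> carrier_vec n" "v0 \<noteq> 0\<^sub>v n" "M *\<^sub>v v0 = c \<cdot>\<^sub>v v0"
  and v: "v \<in> carrier_vec n"
  shows "M *\<^sub>v v = c \<cdot>\<^sub>v v"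
proof -
  let ?W = "{v \<in> carrier_vec n. M *\<^sub>v v = c \<cdot>\<^sub>v v}"
  have MEi: "M * Ei = Ei * M"
  proof -
    have "E * (M * Ei) = (E * M) * Ei" by (rule assoc_mult_mat[symmetric, OF E M Ei(1)])
    also have "\<dots> = (M * E) * Ei" by (simp only: ME)
    also have "\<dots> = M * (E * Ei)" by (rule assoc_mult_mat[OF M E Ei(1)])
    also have "\<dots> = M" using Ei(2) M by simp
    finally have e: "E * (M * Ei) = M" .
    have "M * Ei = Ei * (E * (M * Ei))" by (rule mult_cancel_left[OF Ei(1) E Ei(3), symmetric]) (use M Ei in auto)
    then show ?thesis unfolding e .
  qed
  have comm: "A *\<^sub>v w \<in> ?W" if A: "A \<in> carrier_mat n n" and MA: "M * A = A * M" and w: "w \<in> ?W" for A w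
  proof -
    have wc: "w \<in> carrier_vec n" using w by simp
    have "M *\<^sub>v (A *\<^sub>v w) = (M * A) *\<^sub>v w" using assoc_mult_mat_vec[OF M A wc] by simp
    also have "\<dots> = A *\<^sub>v (M *\<^sub>v w)" unfolding MA using assoc_mult_mat_vec[OF A M wc] by simp
    also have "\<dots> = c \<cdot>\<^sub>v (A *\<^sub>v w)" using w mult_mat_vec[OF A wc] by simp
    finally show ?thesis using A wc by simp
  qed
  have inv: "invariant_subspace n E D ?W"
    unfolding invariant_subspace_def
  proof (intro conjI ballI)
    show "subspace_vec n ?W" by (rule subspace_vec_eigen[OF M])
  next
    fix w assume "w \<in> ?W" then show "E *\<^sub>v w \<in> ?W" using comm[OF E ME] by simp
  next
    fix w assume "w \<in> ?W" then show "D *\<^sub>v w \<in> ?W" using comm[OF D MD] by simp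
  next
    fix w assume w: "w \<in> ?W"
    have "Ei *\<^sub>v w \<in> ?W" using comm[OF Ei(1) MEi w] .
    moreover have "E *\<^sub>v (Ei *\<^sub>v w) = w" using assoc_mult_mat_vec[OF E Ei(1), of w] Ei w by auto
    ultimately show "\<exists>u\<in>?W. E *\<^sub>v u = w" by blast
  qed
  have "?W \<noteq> {0\<^sub>v n}" using v0 by auto
  then have "?W = carrier_vec n" using irr inv unfolding irreducible_rep_def by blast
  then show ?thesis using v by auto
qed


definition mtrace :: "complex mat \<Rightarrow> complex" where
  "mtrace A = (\<Sum>i<dim_row A. A $$ (i,i))"

lemma mtrace_comm: assumes A: "A \<in> carrier_mat n m" and B: "B \<in> carrier_mat m n"
  shows "mtrace (A * B) = mtrace (B * A)"
proof -
  have "mtrace (A * B) = (\<Sum>i<n. (A * B) $$ (i,i))" unfolding mtrace_def using A by simp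
  also have "\<dots> = (\<Sum>i<n. \<Sum>l<m. A $$ (i,l) * B $$ (l,i))"
    by (rule sum.cong[OF refl]) (use mat_mult_index[OF A B] in simp)
  also have "\<dots> = (\<Sum>l<m. \<Sum>i<n. B $$ (l,i) * A $$ (i,l))"
    by (subst sum.swap) (simp add: mult.commute)
  also have "\<dots> = (\<Sum>l<m. (B * A) $$ (l,l))"
    by (rule sum.cong[OF refl]) (use mat_mult_index[OF B A] in simp)
  also have "\<dots> = mtrace (B * A)" unfolding mtrace_def using B by simp
  finally show ?thesis .
qed

lemma mtrace_one: "mtrace (1\<^sub>m n) = of_nat n"
  unfolding mtrace_def by simp

lemma mult_unit_vec_col: assumes Q: "(Q::complex mat) \<in> carrier_mat n m" and j: "j < m"
  shows "Q *\<^sub>v unit_vec m j = col Q j"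
proof (rule eq_vecI)
  fix i assume "i < dim_vec (col Q j)" then have i: "i < n" using Q by simp
  have "(Q *\<^sub>v unit_vec m j) $ i = (\<Sum>l<m. Q $$ (i,l) * unit_vec m j $ l)"
    by (rule mat_vec_index[OF Q _ i]) simp
  also have "\<dots> = (\<Sum>l<m. if l = j then Q $$ (i,j) else 0)" by (rule sum.cong[OF refl]) (use j in auto)
  also have "\<dots> = Q $$ (i,j)" using j by simp
  finally show "(Q *\<^sub>v unit_vec m j) $ i = col Q j $ i" using i j Q by simp
qed (use Q in simp)

lemma dim_from_Q:
  assumes irr: "irreducible_rep N n E D" and E: "E \<in> carrier_mat n n" and D: "D \<in> carrier_mat n n"
  and Ei: "Ei \<in> carrier_mat n n" "E * Ei = 1\<^sub>m n" "Ei * E = 1\<^sub>m n"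
  and Q: "Q \<in> carrier_mat n N"
  and Qinj: "\<And>x. x \<in> carrier_vec N \<Longrightarrow> Q *\<^sub>v x = 0\<^sub>v n \<Longrightarrow> x = 0\<^sub>v N"
  and S: "S \<in> carrier_mat N N" and T: "T \<in> carrier_mat N N"
  and Si: "Si \<in> carrier_mat N N" "S * Si = 1\<^sub>m N"
  and EQ: "E * Q = Q * S" and DQ: "D * Q = Q * T" and N: "N > 0"
  shows "n = N \<and> equiv_rep n E D N S T"
proof -
  let ?W = "{w. \<exists>x\<in>carrier_vec N. w = Q *\<^sub>v x}"
  have Qeq: "x = y" if xy: "x \<in> carrier_vec N" "y \<in> carrier_vec N" and e: "Q *\<^sub>v x = Q *\<^sub>v y" for x y
  proof -
    have "Q *\<^sub>v (x - y) = Q *\<^sub>v x - Q *\<^sub>v y" using mult_minus_distrib_mat_vec[OF Q xy] .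
    also have "\<dots> = 0\<^sub>v n" using e mult_mat_vec_carrier[OF Q xy(2)] by simp
    finally have z: "x - y = 0\<^sub>v N" using Qinj xy by simp
    show ?thesis
    proof (rule eq_vecI)
      fix i assume "i < dim_vec y" then have i: "i < N" using xy by simp
      have "(x - y) $ i = 0" using z i by simp
      then show "x $ i = y $ i" using i xy by simp
    qed (use xy in simp)
  qed
  have inv: "invariant_subspace n E D ?W"
    unfolding invariant_subspace_def subspace_vec_def
  proof (intro conjI ballI allI)
    show "?W \<subseteq> carrier_vec n" using Q by auto
    show "0\<^sub>v n \<in> ?W" using mult_mat_vec_zero[OF Q] by (auto intro!: bexI[of _ "0\<^sub>v N"])
  next
    fix v w assume "v \<in> ?W" "w \<in> ?W"
    then obtain x y where x: "x \<in> carrier_vec N" "v = Q *\<^sub>v x" and y: "y \<in> carrier_vec N" "w = Q *\<^sub>v y" by auto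
    then show "v + w \<in> ?W" using mult_add_distrib_mat_vec[OF Q x(1) y(1)] by (auto intro!: bexI[of _ "x + y"])
  next
    fix c v assume "v \<in> ?W"
    then obtain x where x: "x \<in> carrier_vec N" "v = Q *\<^sub>v x" by auto
    then show "c \<cdot>\<^sub>v v \<in> ?W" using mult_mat_vec[OF Q x(1), of c] by (auto intro!: bexI[of _ "c \<cdot>\<^sub>v x"])
  next
    fix v assume "v \<in> ?W"
    then obtain x where x: "x \<in> carrier_vec N" "v = Q *\<^sub>v x" by auto
    have "E *\<^sub>v v = Q *\<^sub>v (S *\<^sub>v x)"
      using x assoc_mult_mat_vec[OF E Q x(1)] assoc_mult_mat_vec[OF Q S x(1)] EQ by simp
    then show "E *\<^sub>v v \<in> ?W" using S x by auto
  next
    fix v assume "v \<in> ?W"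
    then obtain x where x: "x \<in> carrier_vec N" "v = Q *\<^sub>v x" by auto
    have "D *\<^sub>v v = Q *\<^sub>v (T *\<^sub>v x)"
      using x assoc_mult_mat_vec[OF D Q x(1)] assoc_mult_mat_vec[OF Q T x(1)] DQ by simp
    then show "D *\<^sub>v v \<in> ?W" using T x by auto
  next
    fix v assume "v \<in> ?W"
    then obtain x where x: "x \<in> carrier_vec N" "v = Q *\<^sub>v x" by auto
    have six: "Si *\<^sub>v x \<in> carrier_vec N" using Si x by simp
    have "E *\<^sub>v (Q *\<^sub>v (Si *\<^sub>v x)) = Q *\<^sub>v (S *\<^sub>v (Si *\<^sub>v x))"
      using assoc_mult_mat_vec[OF E Q six] assoc_mult_mat_vec[OF Q S six] EQ by simp
    also have "S *\<^sub>v (Si *\<^sub>v x) = x" using assoc_mult_mat_vec[OF S Si(1) x(1)] Si x by simp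
    finally have "E *\<^sub>v (Q *\<^sub>v (Si *\<^sub>v x)) = v" using x by simp
    then show "\<exists>u\<in>?W. E *\<^sub>v u = v" using six by blast
  qed
  have "Q *\<^sub>v unit_vec N 0 \<in> ?W" by auto
  moreover have "Q *\<^sub>v unit_vec N 0 \<noteq> 0\<^sub>v n"
  proof
    assume "Q *\<^sub>v unit_vec N 0 = 0\<^sub>v n"
    then have "unit_vec N 0 = (0\<^sub>v N :: complex vec)" using Qinj by simp
    then have "unit_vec N 0 $ 0 = (0\<^sub>v N :: complex vec) $ 0" by simp
    then show False using N by simp
  qed
  ultimately have "?W \<noteq> {0\<^sub>v n}" by blast
  then have Wall: "?W = carrier_vec n" using irr inv unfolding irreducible_rep_def by blast
  define X where "X i = (SOME x. x \<in> carrier_vec N \<and> Q *\<^sub>v x = unit_vec n i)" for i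
  have X: "X i \<in> carrier_vec N \<and> Q *\<^sub>v X i = unit_vec n i" if i: "i < n" for i
  proof -
    have "unit_vec n i \<in> ?W" using Wall by simp
    then have "\<exists>x. x \<in> carrier_vec N \<and> Q *\<^sub>v x = unit_vec n i" by auto
    then show ?thesis unfolding X_def by (rule someI_ex)
  qed
  define R where "R = mat N n (\<lambda>(k,i). X i $ k)"
  have R: "R \<in> carrier_mat N n" by (simp add: R_def)
  have colR: "col R i = X i" if i: "i < n" for i
    using X[OF i] i by (auto simp: R_def)
  have QR: "Q * R = 1\<^sub>m n"
  proof (rule eq_matI)
    fix i j assume "i < dim_row (1\<^sub>m n :: complex mat)" "j < dim_col (1\<^sub>m n :: complex mat)"
    then have i: "i < n" and j: "j < n" by auto
    have "(Q * R) $$ (i,j) = col (Q * R) j $ i" using i j Q R by simp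
    also have "\<dots> = (Q *\<^sub>v X j) $ i" using col_mult2[OF Q R j] colR[OF j] by simp
    also have "\<dots> = 1\<^sub>m n $$ (i,j)" using X[OF j] i j by simp
    finally show "(Q * R) $$ (i,j) = 1\<^sub>m n $$ (i,j)" .
  qed (use Q R in auto)
  have RQ: "R * Q = 1\<^sub>m N"
  proof (rule eq_matI)
    fix i j assume "i < dim_row (1\<^sub>m N :: complex mat)" "j < dim_col (1\<^sub>m N :: complex mat)"
    then have i: "i < N" and j: "j < N" by auto
    have cQ: "col Q j \<in> carrier_vec n" unfolding carrier_vec_def using Q by simp
    have "Q *\<^sub>v (R *\<^sub>v col Q j) = (Q * R) *\<^sub>v col Q j" using assoc_mult_mat_vec[OF Q R cQ] by simp
    also have "\<dots> = col Q j" unfolding QR using cQ by simp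
    also have "\<dots> = Q *\<^sub>v unit_vec N j" using mult_unit_vec_col[OF Q j] by simp
    finally have "R *\<^sub>v col Q j = unit_vec N j" using Qeq R cQ by simp
    then have "col (R * Q) j = unit_vec N j" using col_mult2[OF R Q j] by simp
    then have "col (R * Q) j $ i = unit_vec N j $ i" by simp
    then show "(R * Q) $$ (i,j) = 1\<^sub>m N $$ (i,j)" using i j R Q by simp
  qed (use Q R in auto)
  have "of_nat n = mtrace (Q * R)" unfolding QR mtrace_one ..
  also have "\<dots> = mtrace (R * Q)" by (rule mtrace_comm[OF Q R])
  also have "\<dots> = of_nat N" unfolding RQ mtrace_one ..
  finally have nN: "n = N" by simp
  have RN: "R \<in> carrier_mat N N" and QN: "Q \<in> carrier_mat N N" using R Q nN by auto
  have EN: "E \<in> carrier_mat N N" and DN: "D \<in> carrier_mat N N" using E D nN by auto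
  have QRN: "Q * R = 1\<^sub>m N" using QR nN by simp
  have invR: "invertible_mat R" by (rule invertible_intro[OF RN QN RQ QRN])
  have conj: "R * M = M' * R" if M: "M \<in> carrier_mat N N" and M': "M' \<in> carrier_mat N N" and MQ: "M * Q = Q * M'" for M M'
  proof -
    have "M * (Q * R) = (M * Q) * R" by (rule assoc_mult_mat[symmetric, OF M QN RN])
    also have "\<dots> = (Q * M') * R" unfolding MQ ..
    also have "\<dots> = Q * (M' * R)" by (rule assoc_mult_mat[OF QN M' RN])
    finally have "M = Q * (M' * R)" using QRN M by simp
    then have "R * M = R * (Q * (M' * R))" by simp
    also have "\<dots> = M' * R" by (rule mult_cancel_left[OF RN QN RQ mult_carrier_mat[OF M' RN]])
    finally show ?thesis .
  qed
  show ?thesis unfolding equiv_rep_def using nN RN invR conj[OF EN S EQ] conj[OF DN T DQ] by auto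
qed


lemma pow_inj: assumes M: "(M::complex mat) \<in> carrier_mat n n" and B: "B \<in> carrier_mat n n" and BM: "B * M = 1\<^sub>m n"
  shows "v \<in> carrier_vec n \<Longrightarrow> M ^\<^sub>m k *\<^sub>v v = 0\<^sub>v n \<Longrightarrow> v = 0\<^sub>v n"
proof (induction k arbitrary: v)
  case 0 then show ?case using M by simp
next
  case (Suc k)
  have Mv: "M *\<^sub>v v \<in> carrier_vec n" using M Suc.prems by simp
  have "M ^\<^sub>m Suc k *\<^sub>v v = M ^\<^sub>m k *\<^sub>v (M *\<^sub>v v)"
    using assoc_mult_mat_vec[OF pow_carrier_mat[OF M] M Suc.prems(1), of k] by simp
  then have "M *\<^sub>v v = 0\<^sub>v n" using Suc.IH[OF Mv] Suc.prems by simp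
  then have "B *\<^sub>v (M *\<^sub>v v) = 0\<^sub>v n" using mult_mat_vec_zero[OF B] by simp
  then show ?case using assoc_mult_mat_vec[OF B M Suc.prems(1)] BM Suc.prems(1) by simp
qed

definition vcolm :: "nat \<Rightarrow> complex vec \<Rightarrow> complex mat" where
  "vcolm n u = mat n 1 (\<lambda>(i,_). u $ i)"

lemma vcolm_carrier[simp]: "vcolm n u \<in> carrier_mat n 1" "vcolm n u \<in> carrier_mat n (Suc 0)" by (simp_all add: vcolm_def)

lemma mult_vcolm: assumes M: "M \<in> carrier_mat m n" and u: "u \<in> carrier_vec n"
  shows "M * vcolm n u = vcolm m (M *\<^sub>v u)"
proof (rule eq_matI)
  fix i k assume "i < dim_row (vcolm m (M *\<^sub>v u))" "k < dim_col (vcolm m (M *\<^sub>v u))"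
  then have i: "i < m" and k: "k = 0" by (auto simp: vcolm_def)
  have "(M * vcolm n u) $$ (i,k) = (\<Sum>l<n. M $$ (i,l) * vcolm n u $$ (l,k))"
    by (rule mat_mult_index[OF M vcolm_carrier(1) i]) (simp add: k)
  also have "\<dots> = (\<Sum>l<n. M $$ (i,l) * u $ l)" by (rule sum.cong[OF refl]) (auto simp: vcolm_def k)
  also have "\<dots> = (M *\<^sub>v u) $ i" using mat_vec_index[OF M u i] by simp
  finally show "(M * vcolm n u) $$ (i,k) = vcolm m (M *\<^sub>v u) $$ (i,k)" using i k by (simp add: vcolm_def)
qed (use M in \<open>auto simp: vcolm_def\<close>)

lemma vcolm_smult: "vcolm n (c \<cdot>\<^sub>v u) = c \<cdot>\<^sub>m vcolm n u" if "u \<in> carrier_vec n"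
  using that by (auto simp: vcolm_def mat_eq_iff)

lemma vcolm_inj: assumes u: "u \<in> carrier_vec n" "u \<noteq> 0\<^sub>v n" and z: "z \<in> carrier_vec 1" and e: "vcolm n u *\<^sub>v z = 0\<^sub>v n"
  shows "z = 0\<^sub>v 1"
proof -
  obtain i where i: "i < n" "u $ i \<noteq> 0"
  proof -
    have "\<exists>i<n. u $ i \<noteq> 0"
    proof (rule ccontr)
      assume "\<not> ?thesis" then have "u = 0\<^sub>v n" using u(1) by (auto simp: vec_eq_iff)
      then show False using u(2) by simp
    qed
    then show ?thesis using that by blast
  qed
  have "(vcolm n u *\<^sub>v z) $ i = (\<Sum>l<1. vcolm n u $$ (i,l) * z $ l)"
    by (rule mat_vec_index[OF vcolm_carrier(1) z i(1)])
  also have "\<dots> = u $ i * z $ 0" using i by (simp add: vcolm_def)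
  finally have "u $ i * z $ 0 = 0" using e i by simp
  then have "z $ 0 = 0" using i by simp
  then show ?thesis using z by (auto simp: vec_eq_iff)
qed

lemma classify:
  assumes N: "N > 0" and irr: "irreducible_rep N n E D" and cyc: "cyclic_rep N n E D"
  shows "\<exists>a y. a \<noteq> 0 \<and> y \<noteq> 0 \<and> equiv_rep n E D N (std_E N a y) (std_D N a y)"
proof -
  have E: "E \<in> carrier_mat n n" and D: "D \<in> carrier_mat n n" and ED: "E * D = omega N \<cdot>\<^sub>m (D * E)"
    and iE: "invertible_mat E" and iD: "invertible_mat D"
    using cyc unfolding cyclic_rep_def is_rep_def by auto
  have n: "n > 0" using irr unfolding irreducible_rep_def by auto
  obtain Ei where Ei: "Ei \<in> carrier_mat n n" "E * Ei = 1\<^sub>m n" "Ei * E = 1\<^sub>m n" using invertible_obtain[OF iE E] .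
  obtain Di where Di: "Di \<in> carrier_mat n n" "D * Di = 1\<^sub>m n" "Di * D = 1\<^sub>m n" using invertible_obtain[OF iD D] .
  let ?M = "D ^\<^sub>m N"
  have M: "?M \<in> carrier_mat n n" using D by simp
  have ME: "?M * E = E * ?M" using pow_mat_qcomm[OF E D ED, of N] omega_N[OF N] by simp
  have MD: "?M * D = D * ?M" using pow_mat_Suc_left[OF D, of N] by simp
  obtain c where "c \<in> spectrum ?M" using spectrum_non_empty[OF M n] by blast
  then obtain v0 where v0: "v0 \<in> carrier_vec n" "v0 \<noteq> 0\<^sub>v n" "?M *\<^sub>v v0 = c \<cdot>\<^sub>v v0"
    unfolding spectrum_def eigenvalue_def eigenvector_def using D by auto
  obtain lam where "lam \<in> spectrum E" using spectrum_non_empty[OF E n] by blast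
  then obtain u where u: "u \<in> carrier_vec n" "u \<noteq> 0\<^sub>v n" "E *\<^sub>v u = lam \<cdot>\<^sub>v u"
    unfolding spectrum_def eigenvalue_def eigenvector_def using E by auto
  have Mu: "?M *\<^sub>v u = c \<cdot>\<^sub>v u" by (rule schur_scalar[OF irr E D Ei M ME MD v0 u(1)])
  have lam: "lam \<noteq> 0"
  proof
    assume "lam = 0"
    then have "E ^\<^sub>m 1 *\<^sub>v u = 0\<^sub>v n" using u E by (auto simp: vec_eq_iff)
    then show False using pow_inj[OF E Ei(1) Ei(3) u(1)] u(2) by blast
  qed
  have c: "c \<noteq> 0"
  proof
    assume "c = 0"
    then have "D ^\<^sub>m N *\<^sub>v u = 0\<^sub>v n" using Mu u by (auto simp: vec_eq_iff)
    then show False using pow_inj[OF D Di(1) Di(3) u(1)] u(2) by blast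
  qed
  define a where "a = csqrt lam"
  have a2: "a^2 = lam" unfolding a_def by simp
  have a: "a \<noteq> 0" using lam a2 by auto
  obtain t where t: "t ^ N = c" using nth_root_exists[OF N c] by blast
  have t0: "t \<noteq> 0" using t c N by auto
  let ?U = "vcolm n u"
  have U: "?U \<in> carrier_mat n 1" by simp
  have EU: "E * ?U = (a^2) \<cdot>\<^sub>m ?U" unfolding mult_vcolm[OF E u(1)] u(3) a2 by (rule vcolm_smult[OF u(1)])
  have DU: "D ^\<^sub>m N * ?U = (t^N) \<cdot>\<^sub>m ?U" unfolding mult_vcolm[OF M u(1)] Mu t by (rule vcolm_smult[OF u(1)])
  let ?Q = "Qmat N n 1 t D ?U"
  have Q: "?Q \<in> carrier_mat n N" using Qmat_carrier[of N n 1 t D ?U] by simp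
  have EQ: "E * ?Q = ?Q * std_E N a (t/a)"
    using G_E[OF N E D U ED EU, of t "t/a"] diag_copies_1[OF std_carrier(1)] by simp
  have DQ: "D * ?Q = ?Q * std_D N a (t/a)"
    using G_D[OF N D U DU a t0] diag_copies_1[OF std_carrier(2)] by simp
  have Qinj: "x = 0\<^sub>v N" if "x \<in> carrier_vec N" "?Q *\<^sub>v x = 0\<^sub>v n" for x
    using G_inj[OF N E D U ED EU DU a t0, of x] vcolm_inj[OF u(1,2)] that by simp
  have y: "t / a \<noteq> 0" using a t0 by simp
  have iS: "invertible_mat (std_E N a (t/a))" using std_cyclic_rep[OF N a y] unfolding cyclic_rep_def by simp
  obtain Si where Si: "Si \<in> carrier_mat N N" "std_E N a (t/a) * Si = 1\<^sub>m N"
    using invertible_obtain[OF iS std_carrier(1)] by metis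
  have "n = N \<and> equiv_rep n E D N (std_E N a (t/a)) (std_D N a (t/a))"
    by (rule dim_from_Q[OF irr E D Ei Q Qinj std_carrier(1) std_carrier(2) Si EQ DQ N])
  then show ?thesis using a y by blast
qed


section \<open>q-binomial theorem\<close>

fun qb :: "complex \<Rightarrow> nat \<Rightarrow> nat \<Rightarrow> complex" where
  "qb q 0 k = (if k = 0 then 1 else 0)"
| "qb q (Suc n) 0 = 1"
| "qb q (Suc n) (Suc k) = qb q n (Suc k) + q ^ (n - k) * qb q n k"

lemma qb_0[simp]: "qb q n 0 = 1" by (cases n) auto

lemma qb_gt: "n < k \<Longrightarrow> qb q n k = 0"
proof (induction n arbitrary: k)
  case (Suc n) then show ?case by (cases k) auto
qed simp

lemma qb_diag: "qb q n n = 1"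
  by (induction n) (auto simp: qb_gt)

lemma qb_prod: "qb q n k * (\<Prod>j<k. (1 - q ^ (j + 1))) = (\<Prod>j<k. (1 - q ^ (n - j)))"
proof (induction n arbitrary: k)
  case 0
  then show ?case
  proof (cases k)
    case (Suc k')
    have "(\<Prod>j<Suc k'. (1 - q ^ (0 - j))) = 0" by (subst prod.lessThan_Suc_shift) simp
    then show ?thesis using Suc by simp
  qed simp
next
  case (Suc n)
  show ?case
  proof (cases k)
    case 0 then show ?thesis by simp
  next
    case (Suc m)
    let ?P = "\<lambda>k. (\<Prod>j<k. (1 - q ^ (j + 1)))" and ?R = "\<lambda>n k. (\<Prod>j<k. (1 - q ^ (n - j)))"
    have "qb q (Suc n) (Suc m) * ?P (Suc m) = qb q n (Suc m) * ?P (Suc m) + q ^ (n - m) * (1 - q ^ (m + 1)) * (qb q n m * ?P m)"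
      by (simp add: algebra_simps)
    also have "\<dots> = ?R n (Suc m) + q ^ (n - m) * (1 - q ^ (m + 1)) * ?R n m"
      using Suc.IH[of "Suc m"] Suc.IH[of m] by (simp only:)
    also have "\<dots> = ?R n m * ((1 - q ^ (n - m)) + q ^ (n - m) * (1 - q ^ (m + 1)))" by (simp add: algebra_simps)
    also have "\<dots> = ?R n m * (1 - q ^ (Suc n))"
    proof (cases "m \<le> n")
      case True
      then have e: "q ^ (n - m) * q ^ (m + 1) = q ^ Suc n" by (simp add: power_add[symmetric])
      have "(1 - q ^ (n - m)) + q ^ (n - m) * (1 - q ^ (m + 1)) = 1 - q ^ (n - m) * q ^ (m + 1)"
        by (simp add: algebra_simps)
      then show ?thesis unfolding e by simp
    next
      case False
      then have "?R n m = 0" by (intro prod_zero bexI[of _ n]) auto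
      then show ?thesis by simp
    qed
    also have "\<dots> = ?R (Suc n) (Suc m)" by (subst prod.lessThan_Suc_shift) (simp add: mult.commute)
    finally show ?thesis using Suc by simp
  qed
qed


lemma qb_vanish: assumes N: "N > 0" and k: "0 < k" "k < N"
  shows "qb (omega N) N k = 0"
proof -
  let ?q = "omega N"
  have R: "(\<Prod>j<k. (1 - ?q ^ (N - j))) = 0"
    using k omega_N[OF N] by (intro prod_zero bexI[of _ 0]) auto
  have P: "(\<Prod>j<k. (1 - ?q ^ (j + 1))) \<noteq> 0"
  proof
    assume "(\<Prod>j<k. (1 - ?q ^ (j + 1))) = 0"
    then obtain j where j: "j < k" "1 - ?q ^ (j + 1) = 0" by (auto simp: prod_zero_iff)
    then show False using omega_pow_ne1[OF N, of "j+1"] k by auto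
  qed
  show ?thesis using qb_prod[of ?q N k] R P by simp
qed

lemma pow_mat_qcomm2: fixes A :: "complex mat" assumes A: "A \<in> carrier_mat n n" and B: "B \<in> carrier_mat n n"
  and BA: "B * A = q \<cdot>\<^sub>m (A * B)"
  shows "B ^\<^sub>m k * A = (q ^ k) \<cdot>\<^sub>m (A * B ^\<^sub>m k)"
proof (induction k)
  case 0 then show ?case using A B by simp
next
  case (Suc k)
  have Bk: "B ^\<^sub>m k \<in> carrier_mat n n" using B by simp
  have "B ^\<^sub>m Suc k * A = B ^\<^sub>m k * (B * A)" using assoc_mult_mat[OF Bk B A] by simp
  also have "\<dots> = q \<cdot>\<^sub>m (B ^\<^sub>m k * (A * B))" unfolding BA by (rule mult_smult_distrib[OF Bk mult_carrier_mat[OF A B]])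
  also have "B ^\<^sub>m k * (A * B) = (B ^\<^sub>m k * A) * B" using assoc_mult_mat[OF Bk A B] by simp
  also have "\<dots> = ((q ^ k) \<cdot>\<^sub>m (A * B ^\<^sub>m k)) * B" unfolding Suc ..
  also have "\<dots> = (q ^ k) \<cdot>\<^sub>m ((A * B ^\<^sub>m k) * B)" by (rule mult_smult_assoc_mat) (use A B in auto)
  also have "(A * B ^\<^sub>m k) * B = A * B ^\<^sub>m Suc k" using assoc_mult_mat[OF A Bk B] by simp
  finally show ?case by (simp add: mult.commute)
qed

lemma qbinom_mat:
  fixes A :: "complex mat"
  assumes A: "A \<in> carrier_mat d d" and B: "B \<in> carrier_mat d d" and BA: "B * A = q \<cdot>\<^sub>m (A * B)"
  and i: "i < d" and j: "j < d"
  shows "((A + B) ^\<^sub>m n) $$ (i,j) = (\<Sum>k\<le>n. qb q n k * (A ^\<^sub>m k * B ^\<^sub>m (n - k)) $$ (i,j))"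
  using i j
proof (induction n arbitrary: i j)
  case 0 then show ?case using A B by simp
next
  case (Suc n)
  let ?M = "\<lambda>k. A ^\<^sub>m k * B ^\<^sub>m (n - k)"
  let ?F = "\<lambda>k. (A ^\<^sub>m k * B ^\<^sub>m (Suc n - k)) $$ (i,j)"
  have AB: "A + B \<in> carrier_mat d d" using A B by simp
  have Mc: "?M k \<in> carrier_mat d d" for k using mult_carrier_mat[OF pow_carrier_mat[OF A] pow_carrier_mat[OF B]] .
  have Mstep: "(?M k * (A + B)) $$ (i,j) = q ^ (n - k) * ?F (Suc k) + ?F k" if k: "k \<le> n" for k
  proof -
    have Ak: "A ^\<^sub>m k \<in> carrier_mat d d" and Bk: "B ^\<^sub>m (n - k) \<in> carrier_mat d d" using A B by auto
    have "?M k * (A + B) = ?M k * A + ?M k * B" by (rule mult_add_distrib_mat[OF Mc A B])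
    also have "?M k * A = A ^\<^sub>m k * (B ^\<^sub>m (n - k) * A)" using assoc_mult_mat[OF Ak Bk A] by simp
    also have "\<dots> = A ^\<^sub>m k * ((q ^ (n - k)) \<cdot>\<^sub>m (A * B ^\<^sub>m (n - k)))" unfolding pow_mat_qcomm2[OF A B BA] ..
    also have "\<dots> = (q ^ (n - k)) \<cdot>\<^sub>m (A ^\<^sub>m k * (A * B ^\<^sub>m (n - k)))" by (rule mult_smult_distrib[OF Ak mult_carrier_mat[OF A Bk]])
    also have "A ^\<^sub>m k * (A * B ^\<^sub>m (n - k)) = A ^\<^sub>m Suc k * B ^\<^sub>m (Suc n - Suc k)"
      using assoc_mult_mat[OF Ak A Bk] by simp
    also have "?M k * B = A ^\<^sub>m k * B ^\<^sub>m (Suc n - k)"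
      using assoc_mult_mat[OF Ak Bk B] k by (simp add: Suc_diff_le)
    finally show ?thesis using Suc.prems A B by simp
  qed
  have "((A + B) ^\<^sub>m Suc n) $$ (i,j) = (\<Sum>l<d. ((A + B) ^\<^sub>m n) $$ (i,l) * (A + B) $$ (l,j))"
    by (simp only: pow_mat.simps(2), rule mat_mult_index[OF pow_carrier_mat[OF AB] AB Suc.prems])
  also have "\<dots> = (\<Sum>l<d. (\<Sum>k\<le>n. qb q n k * ?M k $$ (i,l)) * (A + B) $$ (l,j))"
    by (rule sum.cong[OF refl]) (use Suc.IH Suc.prems in simp)
  also have "\<dots> = (\<Sum>k\<le>n. qb q n k * (\<Sum>l<d. ?M k $$ (i,l) * (A + B) $$ (l,j)))"
    by (simp add: sum_distrib_right sum_distrib_left mult.assoc sum.swap[of _ "{..<d}"])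
  also have "\<dots> = (\<Sum>k\<le>n. qb q n k * (?M k * (A + B)) $$ (i,j))"
    by (rule sum.cong[OF refl]) (use mat_mult_index[OF Mc AB Suc.prems] in simp)
  also have "\<dots> = (\<Sum>k\<le>n. qb q n k * (q ^ (n - k) * ?F (Suc k) + ?F k))"
    by (rule sum.cong[OF refl]) (simp add: Mstep)
  also have "\<dots> = (\<Sum>k\<le>n. q ^ (n - k) * qb q n k * ?F (Suc k)) + (\<Sum>k\<le>n. qb q n k * ?F k)"
    by (simp add: algebra_simps sum.distrib)
  also have "(\<Sum>k\<le>n. qb q n k * ?F k) = ?F 0 + (\<Sum>k\<le>n. qb q n (Suc k) * ?F (Suc k))"
  proof -
    have "(\<Sum>k\<le>n. qb q n k * ?F k) = (\<Sum>k\<le>Suc n. qb q n k * ?F k)" using qb_gt[of n "Suc n" q] by simp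
    also have "\<dots> = ?F 0 + (\<Sum>k\<le>n. qb q n (Suc k) * ?F (Suc k))" by (subst sum.atMost_Suc_shift) simp
    finally show ?thesis .
  qed
  also have "(\<Sum>k\<le>n. q ^ (n - k) * qb q n k * ?F (Suc k)) + (?F 0 + (\<Sum>k\<le>n. qb q n (Suc k) * ?F (Suc k)))
      = qb q (Suc n) 0 * ?F 0 + (\<Sum>k\<le>n. qb q (Suc n) (Suc k) * ?F (Suc k))"
    by (simp add: algebra_simps sum.distrib)
  also have "\<dots> = (\<Sum>k\<le>Suc n. qb q (Suc n) k * ?F k)" by (subst sum.atMost_Suc_shift) simp
  finally show ?case .
qed


lemma qbinom_N: fixes A :: "complex mat"
  assumes N: "N > 0" and A: "A \<in> carrier_mat d d" and B: "B \<in> carrier_mat d d"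
  and BA: "B * A = omega N \<cdot>\<^sub>m (A * B)"
  shows "(A + B) ^\<^sub>m N = A ^\<^sub>m N + B ^\<^sub>m N"
proof (rule eq_matI)
  fix i j assume "i < dim_row (A ^\<^sub>m N + B ^\<^sub>m N)" "j < dim_col (A ^\<^sub>m N + B ^\<^sub>m N)"
  then have i: "i < d" and j: "j < d" using A B N by auto
  let ?f = "\<lambda>k. qb (omega N) N k * (A ^\<^sub>m k * B ^\<^sub>m (N - k)) $$ (i,j)"
  have "((A + B) ^\<^sub>m N) $$ (i,j) = (\<Sum>k\<le>N. ?f k)" by (rule qbinom_mat[OF A B BA i j])
  also have "\<dots> = (\<Sum>k\<in>{0, N}. ?f k)"
  proof (rule sum.mono_neutral_right)
    show "\<forall>k\<in>{..N} - {0, N}. ?f k = 0" using qb_vanish[OF N] by auto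
  qed auto
  also have "\<dots> = ?f 0 + ?f N" using N by simp
  also have "\<dots> = (A ^\<^sub>m N + B ^\<^sub>m N) $$ (i,j)" using A B i j by (simp add: qb_diag)
  finally show "((A + B) ^\<^sub>m N) $$ (i,j) = (A ^\<^sub>m N + B ^\<^sub>m N) $$ (i,j)" .
qed (use A B in auto)

section \<open>Kronecker products\<close>

lemma kron_mixed: assumes A: "A \<in> carrier_mat N N" and B: "B \<in> carrier_mat N N"
  and C: "C \<in> carrier_mat N N" and D: "D \<in> carrier_mat N N" and N: "N > 0"
  shows "kron A B * kron C D = kron (A * C) (B * D)"
proof (rule eq_matI)
  fix i j assume "i < dim_row (kron (A * C) (B * D))" "j < dim_col (kron (A * C) (B * D))"
  then have i: "i < N * N" and j: "j < N * N" using A B C D by (auto simp: kron_def)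
  have id: "i div N < N" "i mod N < N" "j div N < N" "j mod N < N" using i j N
    by (auto simp: less_mult_imp_div_less)
  have KA: "kron A B \<in> carrier_mat (N*N) (N*N)" and KC: "kron C D \<in> carrier_mat (N*N) (N*N)"
    using A B C D by auto
  have "(kron A B * kron C D) $$ (i,j) = (\<Sum>l<N*N. kron A B $$ (i,l) * kron C D $$ (l,j))"
    by (rule mat_mult_index[OF KA KC i j])
  also have "\<dots> = (\<Sum>c<N. \<Sum>m<N. kron A B $$ (i,c*N+m) * kron C D $$ (c*N+m,j))" by (rule sum_div_mod)
  also have "\<dots> = (\<Sum>c<N. \<Sum>m<N. (A $$ (i div N, c) * C $$ (c, j div N)) * (B $$ (i mod N, m) * D $$ (m, j mod N)))"
  proof (intro sum.cong refl)
    fix c m assume c: "c \<in> {..<N}" and m: "m \<in> {..<N}"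
    have cm: "c * N + m < N * N"
    proof -
      have "c * N + m < c * N + N" using m by simp
      also have "\<dots> = Suc c * N" by simp
      also have "\<dots> \<le> N * N" using c by (intro mult_le_mono1) simp
      finally show ?thesis .
    qed
    have "(c * N + m) div N = c" "(c * N + m) mod N = m" using m N by auto
    then show "kron A B $$ (i,c*N+m) * kron C D $$ (c*N+m,j) = (A $$ (i div N, c) * C $$ (c, j div N)) * (B $$ (i mod N, m) * D $$ (m, j mod N))"
      using kron_index[OF A B i cm] kron_index[OF C D cm j] by (simp add: mult_ac)
  qed
  also have "\<dots> = (\<Sum>c<N. A $$ (i div N, c) * C $$ (c, j div N)) * (\<Sum>m<N. B $$ (i mod N, m) * D $$ (m, j mod N))"
    by (simp add: sum_product)
  also have "\<dots> = (A * C) $$ (i div N, j div N) * (B * D) $$ (i mod N, j mod N)"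
    using mat_mult_index[OF A C id(1) id(3)] mat_mult_index[OF B D id(2) id(4)] by simp
  also have "\<dots> = kron (A * C) (B * D) $$ (i,j)"
    using kron_index[OF mult_carrier_mat[OF A C] mult_carrier_mat[OF B D] i j] by simp
  finally show "(kron A B * kron C D) $$ (i,j) = kron (A * C) (B * D) $$ (i,j)" .
qed (use A B C D in \<open>auto simp: kron_def\<close>)

lemma kron_one: "kron (1\<^sub>m N) (1\<^sub>m N) = (1\<^sub>m (N * N) :: complex mat)"
proof (rule eq_matI)
  fix i j assume "i < dim_row (1\<^sub>m (N * N) :: complex mat)" "j < dim_col (1\<^sub>m (N * N) :: complex mat)"
  then have i: "i < N * N" and j: "j < N * N" by auto
  then have N: "N > 0" by (cases N) auto
  have id: "i div N < N" "i mod N < N" "j div N < N" "j mod N < N" using i j N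
    by (auto simp: less_mult_imp_div_less)
  show "kron (1\<^sub>m N) (1\<^sub>m N) $$ (i,j) = (1\<^sub>m (N * N) :: complex mat) $$ (i,j)"
    using kron_index[OF one_carrier_mat one_carrier_mat i j] id i j idx_eq_iff[of i j N] by auto
qed (auto simp: kron_def)

lemma kron_smult_left: assumes A: "A \<in> carrier_mat N N" and B: "B \<in> carrier_mat N N"
  shows "kron (c \<cdot>\<^sub>m A) B = c \<cdot>\<^sub>m kron A B"
proof (rule eq_matI)
  fix i j assume "i < dim_row (c \<cdot>\<^sub>m kron A B)" "j < dim_col (c \<cdot>\<^sub>m kron A B)"
  then have i: "i < N * N" and j: "j < N * N" using A B by (auto simp: kron_def)
  then have N: "N > 0" by (cases N) auto
  have id: "i div N < N" "i mod N < N" "j div N < N" "j mod N < N" using i j N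
    by (auto simp: less_mult_imp_div_less)
  show "kron (c \<cdot>\<^sub>m A) B $$ (i,j) = (c \<cdot>\<^sub>m kron A B) $$ (i,j)"
  proof -
    have "(c \<cdot>\<^sub>m kron A B) $$ (i,j) = c * kron A B $$ (i,j)" using kron_carrier[OF A B] i j by auto
    then show ?thesis
      using kron_index[OF A B i j] kron_index[of "c \<cdot>\<^sub>m A" N N B N N, OF _ B i j] A id i j by simp
  qed
qed (use A B in \<open>auto simp: kron_def\<close>)

lemma kron_smult_right: assumes A: "A \<in> carrier_mat N N" and B: "B \<in> carrier_mat N N"
  shows "kron A (c \<cdot>\<^sub>m B) = c \<cdot>\<^sub>m kron A B"
proof (rule eq_matI)
  fix i j assume "i < dim_row (c \<cdot>\<^sub>m kron A B)" "j < dim_col (c \<cdot>\<^sub>m kron A B)"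
  then have i: "i < N * N" and j: "j < N * N" using A B by (auto simp: kron_def)
  then have N: "N > 0" by (cases N) auto
  have id: "i div N < N" "i mod N < N" "j div N < N" "j mod N < N" using i j N
    by (auto simp: less_mult_imp_div_less)
  show "kron A (c \<cdot>\<^sub>m B) $$ (i,j) = (c \<cdot>\<^sub>m kron A B) $$ (i,j)"
  proof -
    have "(c \<cdot>\<^sub>m kron A B) $$ (i,j) = c * kron A B $$ (i,j)" using kron_carrier[OF A B] i j by auto
    then show ?thesis
      using kron_index[OF A B i j] kron_index[of A N N "c \<cdot>\<^sub>m B" N N, OF A _ i j] B id i j by simp
  qed
qed (use A B in \<open>auto simp: kron_def\<close>)

lemma kron_pow: assumes A: "A \<in> carrier_mat N N" and B: "B \<in> carrier_mat N N" and N: "N > 0"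
  shows "kron A B ^\<^sub>m k = kron (A ^\<^sub>m k) (B ^\<^sub>m k)"
proof (induction k)
  case 0 then show ?case using A B kron_one[of N] by (simp add: kron_def)
next
  case (Suc k)
  then show ?case using kron_mixed[OF pow_carrier_mat[OF A] pow_carrier_mat[OF B] A B N] by simp
qed


lemma tensor_transfer:
  assumes N: "N > 0"
  and E1: "E1 \<in> carrier_mat N N" and D1: "D1 \<in> carrier_mat N N" and E2: "E2 \<in> carrier_mat N N" and D2: "D2 \<in> carrier_mat N N"
  and S1: "S1 \<in> carrier_mat N N" and T1: "T1 \<in> carrier_mat N N" and S2: "S2 \<in> carrier_mat N N" and T2: "T2 \<in> carrier_mat N N"
  and e1: "equiv_rep N E1 D1 N S1 T1" and e2: "equiv_rep N E2 D2 N S2 T2"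
  shows "equiv_rep (N*N) (tensor_E E1 E2) (tensor_D E1 D1 E2 D2) (N*N) (tensor_E S1 S2) (tensor_D S1 T1 S2 T2)"
proof -
  from e1 obtain P1 where P1: "P1 \<in> carrier_mat N N" "invertible_mat P1" "P1 * E1 = S1 * P1" "P1 * D1 = T1 * P1"
    unfolding equiv_rep_def by auto
  from e2 obtain P2 where P2: "P2 \<in> carrier_mat N N" "invertible_mat P2" "P2 * E2 = S2 * P2" "P2 * D2 = T2 * P2"
    unfolding equiv_rep_def by auto
  obtain B1 where B1: "B1 \<in> carrier_mat N N" "P1 * B1 = 1\<^sub>m N" "B1 * P1 = 1\<^sub>m N" using invertible_obtain[OF P1(2,1)] .
  obtain B2 where B2: "B2 \<in> carrier_mat N N" "P2 * B2 = 1\<^sub>m N" "B2 * P2 = 1\<^sub>m N" using invertible_obtain[OF P2(2,1)] .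
  let ?P = "kron P1 P2"
  have P: "?P \<in> carrier_mat (N*N) (N*N)" using P1 P2 by simp
  have B: "kron B1 B2 \<in> carrier_mat (N*N) (N*N)" using B1 B2 by simp
  have i1: "?P * kron B1 B2 = 1\<^sub>m (N*N)" using kron_mixed[OF P1(1) P2(1) B1(1) B2(1) N] B1 B2 kron_one[of N] by simp
  have i2: "kron B1 B2 * ?P = 1\<^sub>m (N*N)" using kron_mixed[OF B1(1) B2(1) P1(1) P2(1) N] B1 B2 kron_one[of N] by simp
  have inv: "invertible_mat ?P" by (rule invertible_intro[OF P B i1 i2])
  have one: "1\<^sub>m N \<in> carrier_mat N N" by simp
  have cE: "?P * tensor_E E1 E2 = tensor_E S1 S2 * ?P"
    unfolding tensor_E_def kron_mixed[OF P1(1) P2(1) E1 E2 N] kron_mixed[OF S1 S2 P1(1) P2(1) N] P1(3) P2(3) ..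
  have "?P * tensor_D E1 D1 E2 D2 = ?P * kron E1 D2 + ?P * kron D1 (1\<^sub>m N)"
    unfolding tensor_D_def using E2 by (simp add: mult_add_distrib_mat[OF P kron_carrier[OF E1 D2] kron_carrier[OF D1 one]])
  also have "\<dots> = kron S1 T2 * ?P + kron T1 (1\<^sub>m N) * ?P"
    unfolding kron_mixed[OF P1(1) P2(1) E1 D2 N] kron_mixed[OF P1(1) P2(1) D1 one N]
      kron_mixed[OF S1 T2 P1(1) P2(1) N] kron_mixed[OF T1 one P1(1) P2(1) N] P1(3,4) P2(4)
    using P2(1) by simp
  also have "\<dots> = tensor_D S1 T1 S2 T2 * ?P"
    unfolding tensor_D_def using S2 by (simp add: add_mult_distrib_mat[OF kron_carrier[OF S1 T2] kron_carrier[OF T1 one] P])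
  finally have cD: "?P * tensor_D E1 D1 E2 D2 = tensor_D S1 T1 S2 T2 * ?P" .
  show ?thesis unfolding equiv_rep_def using P inv cE cD by blast
qed


lemma pow_one_mat: "(1\<^sub>m n :: complex mat) ^\<^sub>m k = 1\<^sub>m n"
  by (induction k) auto

lemma Dt_pow: assumes N: "N > 0" and a2: "a2 \<noteq> 0"
  shows "tensor_D (std_E N a1 y1) (std_D N a1 y1) (std_E N a2 y2) (std_D N a2 y2) ^\<^sub>m N
     = (a1 ^ N * a2 ^ N * (a1 ^ N * y2 ^ N + y1 ^ N / a2 ^ N)) \<cdot>\<^sub>m 1\<^sub>m (N * N)"
proof -
  let ?S1 = "std_E N a1 y1" and ?T1 = "std_D N a1 y1" and ?S2 = "std_E N a2 y2" and ?T2 = "std_D N a2 y2"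
  let ?A = "kron ?T1 (1\<^sub>m N)" and ?B = "kron ?S1 ?T2"
  have one: "1\<^sub>m N \<in> carrier_mat N N" by simp
  have A: "?A \<in> carrier_mat (N*N) (N*N)" and B: "?B \<in> carrier_mat (N*N) (N*N)" by auto
  have Dt: "tensor_D ?S1 ?T1 ?S2 ?T2 = ?A + ?B"
    unfolding tensor_D_def by (simp add: comm_add_mat[OF B A])
  have BA: "?B * ?A = omega N \<cdot>\<^sub>m (?A * ?B)"
  proof -
    have "?B * ?A = kron (?S1 * ?T1) (?T2 * 1\<^sub>m N)" by (rule kron_mixed[OF std_carrier(1) std_carrier(2) std_carrier(2) one N])
    also have "\<dots> = kron (omega N \<cdot>\<^sub>m (?T1 * ?S1)) ?T2" using stdED[OF N] by simp
    also have "\<dots> = omega N \<cdot>\<^sub>m kron (?T1 * ?S1) ?T2" by (rule kron_smult_left) auto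
    also have "kron (?T1 * ?S1) ?T2 = ?A * ?B"
      using kron_mixed[OF std_carrier(2) one std_carrier(1) std_carrier(2) N] by simp
    finally show ?thesis .
  qed
  have "tensor_D ?S1 ?T1 ?S2 ?T2 ^\<^sub>m N = ?A ^\<^sub>m N + ?B ^\<^sub>m N"
    unfolding Dt by (rule qbinom_N[OF N A B BA])
  also have "?A ^\<^sub>m N = ((a1 * y1) ^ N) \<cdot>\<^sub>m 1\<^sub>m (N * N)"
    unfolding kron_pow[OF std_carrier(2) one N] stdD_pow_N[OF N] pow_one_mat
    using kron_smult_left[OF one one, of "(a1 * y1) ^ N"] kron_one[of N] by simp
  also have "?B ^\<^sub>m N = (a1 ^ (2 * N) * (a2 * y2) ^ N) \<cdot>\<^sub>m 1\<^sub>m (N * N)"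
    unfolding kron_pow[OF std_carrier(1) std_carrier(2) N] stdE_pow_N[OF N] stdD_pow_N[OF N]
    using kron_smult_left[OF one smult_carrier_mat[OF one], of "a1 ^ (2 * N)" "(a2 * y2) ^ N"]
      kron_smult_right[OF one one, of "(a2 * y2) ^ N"] kron_one[of N] by simp
  also have "((a1 * y1) ^ N) \<cdot>\<^sub>m 1\<^sub>m (N * N) + (a1 ^ (2 * N) * (a2 * y2) ^ N) \<cdot>\<^sub>m 1\<^sub>m (N * N)
      = ((a1 * y1) ^ N + a1 ^ (2 * N) * (a2 * y2) ^ N) \<cdot>\<^sub>m 1\<^sub>m (N * N)"
    by (rule add_smult_distrib_right_mat[symmetric, OF one_carrier_mat])
  also have "(a1 * y1) ^ N + a1 ^ (2 * N) * (a2 * y2) ^ N = a1 ^ N * a2 ^ N * (a1 ^ N * y2 ^ N + y1 ^ N / a2 ^ N)"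
    using a2 by (simp add: field_simps power_mult_distrib power_mult mult_2 power2_eq_square)
  finally show ?thesis .
qed


definition Ut :: "nat \<Rightarrow> complex mat" where
  "Ut N = mat (N*N) N (\<lambda>(i,c). if i = c * N + (N - c) mod N then 1 else 0)"

lemma idx_lt: fixes N c :: nat assumes N: "N > 0" and c: "c < N" shows "c * N + (N - c) mod N < N * N"
proof -
  have "c * N + (N - c) mod N < c * N + N" using N by simp
  also have "\<dots> = Suc c * N" by simp
  also have "\<dots> \<le> N * N" using c by (intro mult_le_mono1) simp
  finally show ?thesis .
qed

lemma idx_div: fixes N c :: nat assumes N: "N > 0" shows "(c * N + (N - c) mod N) div N = c" "(c * N + (N - c) mod N) mod N = (N - c) mod N"
  using N by auto

lemma std_tensor_equiv:
  assumes N: "N > 0" and a1: "a1 \<noteq> 0" and a2: "a2 \<noteq> 0" and y: "y \<noteq> 0"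
  and yN: "y ^ N = a1 ^ N * y2 ^ N + y1 ^ N / a2 ^ N"
  shows "equiv_rep (N*N) (diag_copies N (std_E N (a1*a2) y)) (diag_copies N (std_D N (a1*a2) y)) (N*N)
     (tensor_E (std_E N a1 y1) (std_E N a2 y2)) (tensor_D (std_E N a1 y1) (std_D N a1 y1) (std_E N a2 y2) (std_D N a2 y2))"
proof -
  let ?S1 = "std_E N a1 y1" and ?T1 = "std_D N a1 y1" and ?S2 = "std_E N a2 y2" and ?T2 = "std_D N a2 y2"
  let ?E = "tensor_E ?S1 ?S2" and ?D = "tensor_D ?S1 ?T1 ?S2 ?T2"
  let ?a = "a1 * a2" let ?t = "a1 * a2 * y"
  have one: "1\<^sub>m N \<in> carrier_mat N N" by simp
  have E: "?E \<in> carrier_mat (N*N) (N*N)" unfolding tensor_E_def by simp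
  have D: "?D \<in> carrier_mat (N*N) (N*N)" unfolding tensor_D_def by simp
  have U: "Ut N \<in> carrier_mat (N*N) N" by (simp add: Ut_def)
  have a: "?a \<noteq> 0" using a1 a2 by simp
  have t: "?t \<noteq> 0" using a1 a2 y by simp
  have ED: "?E * ?D = omega N \<cdot>\<^sub>m (?D * ?E)"
  proof -
    have k1: "kron ?S1 ?T2 \<in> carrier_mat (N*N) (N*N)" and k2: "kron ?T1 (1\<^sub>m N) \<in> carrier_mat (N*N) (N*N)"
      and k3: "kron ?S1 ?S2 \<in> carrier_mat (N*N) (N*N)" by auto
    have "?E * ?D = kron ?S1 ?S2 * kron ?S1 ?T2 + kron ?S1 ?S2 * kron ?T1 (1\<^sub>m N)"
      unfolding tensor_E_def tensor_D_def by (simp add: mult_add_distrib_mat[OF k3 k1 k2])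
    also have "\<dots> = kron (?S1 * ?S1) (?S2 * ?T2) + kron (?S1 * ?T1) (?S2 * 1\<^sub>m N)"
      using kron_mixed[OF std_carrier(1) std_carrier(1) std_carrier(1) std_carrier(2) N]
        kron_mixed[OF std_carrier(1) std_carrier(1) std_carrier(2) one N] by simp
    also have "\<dots> = kron (?S1 * ?S1) (omega N \<cdot>\<^sub>m (?T2 * ?S2)) + kron (omega N \<cdot>\<^sub>m (?T1 * ?S1)) (1\<^sub>m N * ?S2)"
      using stdED[OF N] by simp
    also have "\<dots> = omega N \<cdot>\<^sub>m kron (?S1 * ?S1) (?T2 * ?S2) + omega N \<cdot>\<^sub>m kron (?T1 * ?S1) (1\<^sub>m N * ?S2)"
      using kron_smult_right[OF mult_carrier_mat[OF std_carrier(1) std_carrier(1)] mult_carrier_mat[OF std_carrier(2) std_carrier(1)], where c = "omega N"]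
        kron_smult_left[OF mult_carrier_mat[OF std_carrier(2) std_carrier(1)] std_carrier(1), where c = "omega N"]
      by simp
    also have "\<dots> = omega N \<cdot>\<^sub>m (kron (?S1 * ?S1) (?T2 * ?S2) + kron (?T1 * ?S1) (1\<^sub>m N * ?S2))"
      by (rule add_smult_distrib_left_mat[symmetric, OF kron_carrier[OF mult_carrier_mat[OF std_carrier(1) std_carrier(1)] mult_carrier_mat[OF std_carrier(2) std_carrier(1)]] kron_carrier[OF mult_carrier_mat[OF std_carrier(2) std_carrier(1)] mult_carrier_mat[OF one std_carrier(1)]]])
    also have "kron (?S1 * ?S1) (?T2 * ?S2) + kron (?T1 * ?S1) (1\<^sub>m N * ?S2) = ?D * ?E"
      unfolding tensor_E_def tensor_D_def
      using kron_mixed[OF std_carrier(1) std_carrier(2) std_carrier(1) std_carrier(1) N]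
        kron_mixed[OF std_carrier(2) one std_carrier(1) std_carrier(1) N]
      by (simp add: add_mult_distrib_mat[OF k1 k2 k3])
    finally show ?thesis .
  qed
  have EU: "?E * Ut N = (?a ^ 2) \<cdot>\<^sub>m Ut N"
  proof (rule eq_matI)
    fix i c assume "i < dim_row ((?a ^ 2) \<cdot>\<^sub>m Ut N)" "c < dim_col ((?a ^ 2) \<cdot>\<^sub>m Ut N)"
    then have i: "i < N * N" and c: "c < N" by (auto simp: Ut_def)
    let ?j = "c * N + (N - c) mod N"
    have j: "?j < N * N" by (rule idx_lt[OF N c])
    have id: "i div N < N" "i mod N < N" using i N by (auto simp: less_mult_imp_div_less)
    have "(?E * Ut N) $$ (i,c) = (\<Sum>l<N*N. ?E $$ (i,l) * Ut N $$ (l,c))" by (rule mat_mult_index[OF E U i c])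
    also have "\<dots> = (\<Sum>l<N*N. if l = ?j then ?E $$ (i,?j) else 0)"
      by (rule sum.cong[OF refl]) (use c in \<open>auto simp: Ut_def\<close>)
    also have "\<dots> = ?E $$ (i,?j)" using j by simp
    also have "\<dots> = ?S1 $$ (i div N, c) * ?S2 $$ (i mod N, (N - c) mod N)"
      unfolding tensor_E_def using kron_index[OF std_carrier(1) std_carrier(1) i j] idx_div[OF N] by simp
    also have "\<dots> = (if i = ?j then ?a ^ 2 else 0)"
    proof (cases "i = ?j")
      case True
      have w: "omega N ^ c * omega N ^ ((N - c) mod N) = 1"
      proof -
        have "omega N ^ c * omega N ^ ((N - c) mod N) = omega N ^ ((c + (N - c) mod N) mod N)"
          by (simp add: omega_mod[OF N] power_add)
        also have "(c + (N - c) mod N) mod N = 0" using c by (simp add: mod_add_right_eq)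
        finally show ?thesis by simp
      qed
      have "?S1 $$ (i div N, c) * ?S2 $$ (i mod N, (N - c) mod N) = a1^2 * a2^2 * (omega N ^ c * omega N ^ ((N - c) mod N))"
        using True idx_div[OF N, of c] c N by (simp add: mult_ac)
      then show ?thesis using True w by (simp add: power_mult_distrib)
    next
      case False
      then have "i div N \<noteq> c \<or> i mod N \<noteq> (N - c) mod N" using idx_eq_iff[of i ?j N] idx_div[OF N] by auto
      then show ?thesis using False id c N by auto
    qed
    also have "\<dots> = ((?a ^ 2) \<cdot>\<^sub>m Ut N) $$ (i,c)" using i c by (simp add: Ut_def)
    finally show "(?E * Ut N) $$ (i,c) = ((?a ^ 2) \<cdot>\<^sub>m Ut N) $$ (i,c)" .
  qed (use E U in auto)
  have DU: "?D ^\<^sub>m N * Ut N = (?t ^ N) \<cdot>\<^sub>m Ut N"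
  proof -
    have "?t ^ N = a1 ^ N * a2 ^ N * (a1 ^ N * y2 ^ N + y1 ^ N / a2 ^ N)" unfolding yN[symmetric]
      by (simp add: power_mult_distrib)
    then have "?D ^\<^sub>m N = (?t ^ N) \<cdot>\<^sub>m 1\<^sub>m (N * N)" using Dt_pow[OF N a2, of a1 y1 y2] by simp
    then show ?thesis using mult_smult_assoc_mat[OF one_carrier_mat U] U by simp
  qed
  have Uinj: "z = 0\<^sub>v N" if z: "z \<in> carrier_vec N" and Uz: "Ut N *\<^sub>v z = 0\<^sub>v (N*N)" for z
  proof (rule eq_vecI)
    fix c assume "c < dim_vec (0\<^sub>v N :: complex vec)"
    then have c: "c < N" by simp
    let ?j = "c * N + (N - c) mod N"
    have j: "?j < N * N" by (rule idx_lt[OF N c])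
    have "(Ut N *\<^sub>v z) $ ?j = (\<Sum>l<N. Ut N $$ (?j,l) * z $ l)" by (rule mat_vec_index[OF U z j])
    also have "\<dots> = (\<Sum>l<N. if l = c then z $ c else 0)"
    proof (rule sum.cong[OF refl])
      fix l assume l: "l \<in> {..<N}"
      have "?j = l * N + (N - l) mod N \<longleftrightarrow> l = c"
        using idx_div[OF N, of c] idx_div[OF N, of l] by metis
      then show "Ut N $$ (?j,l) * z $ l = (if l = c then z $ c else 0)" using l j by (auto simp: Ut_def)
    qed
    also have "\<dots> = z $ c" using c by simp
    finally show "z $ c = 0\<^sub>v N $ c" using Uz j c by simp
  qed (use z in simp)
  have "equiv_rep (N*N) (diag_copies N (std_E N ?a (?t/?a))) (diag_copies N (std_D N ?a (?t/?a))) (N*N) ?E ?D"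
    by (rule G_equiv[OF N E D U ED EU DU a t Uinj])
  moreover have "?t / ?a = y" using a by simp
  ultimately show ?thesis by simp
qed


lemma part3:
  fixes rt :: "complex \<Rightarrow> complex"
  assumes N: "N > 0" and rt: "\<forall>u. rt u ^ N = u"
  and irr1: "irreducible_rep N n1 E1 D1" and irr2: "irreducible_rep N n2 E2 D2"
  and cyc: "cyclic_rep N (n1 * n2) (tensor_E E1 E2) (tensor_D E1 D1 E2 D2)"
  and a1: "a1 \<noteq> 0" and y1: "y1 \<noteq> 0" and a2: "a2 \<noteq> 0" and y2: "y2 \<noteq> 0"
  and e1: "equiv_rep n1 E1 D1 N (std_E N a1 y1) (std_D N a1 y1)"
  and e2: "equiv_rep n2 E2 D2 N (std_E N a2 y2) (std_D N a2 y2)"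
  shows "equiv_rep (n1 * n2) (tensor_E E1 E2) (tensor_D E1 D1 E2 D2)
     (N * N) (diag_copies N (std_E N (a1 * a2) (rt (a1 ^ N * y2 ^ N + y1 ^ N / a2 ^ N))))
             (diag_copies N (std_D N (a1 * a2) (rt (a1 ^ N * y2 ^ N + y1 ^ N / a2 ^ N))))"
proof -
  have n1: "n1 = N" and n2: "n2 = N" using e1 e2 unfolding equiv_rep_def by auto
  have E1: "E1 \<in> carrier_mat N N" and D1: "D1 \<in> carrier_mat N N"
    using irr1 n1 unfolding irreducible_rep_def is_rep_def by auto
  have E2: "E2 \<in> carrier_mat N N" and D2: "D2 \<in> carrier_mat N N"
    using irr2 n2 unfolding irreducible_rep_def is_rep_def by auto
  let ?s = "a1 ^ N * y2 ^ N + y1 ^ N / a2 ^ N"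
  let ?y = "rt ?s"
  let ?S1 = "std_E N a1 y1" and ?T1 = "std_D N a1 y1" and ?S2 = "std_E N a2 y2" and ?T2 = "std_D N a2 y2"
  let ?Eo = "tensor_E E1 E2" and ?Do = "tensor_D E1 D1 E2 D2"
  let ?Es = "tensor_E ?S1 ?S2" and ?Ds = "tensor_D ?S1 ?T1 ?S2 ?T2"
  have one: "1\<^sub>m N \<in> carrier_mat N N" by simp
  have Eo: "?Eo \<in> carrier_mat (N*N) (N*N)" using E1 E2 unfolding tensor_E_def by simp
  have Do: "?Do \<in> carrier_mat (N*N) (N*N)" using E1 D1 E2 D2 unfolding tensor_D_def by simp
  have Es: "?Es \<in> carrier_mat (N*N) (N*N)" unfolding tensor_E_def by simp
  have Ds: "?Ds \<in> carrier_mat (N*N) (N*N)" unfolding tensor_D_def by simp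
  have tr: "equiv_rep (N*N) ?Eo ?Do (N*N) ?Es ?Ds"
    by (rule tensor_transfer[OF N E1 D1 E2 D2 std_carrier(1) std_carrier(2) std_carrier(1) std_carrier(2)])
       (use e1 e2 n1 n2 in auto)
  have yN: "?y ^ N = ?s" using rt by simp
  have y: "?y \<noteq> 0"
  proof
    assume "?y = 0"
    then have s0: "?s = 0" using yN N by (metis zero_power)
    from tr obtain P where P: "P \<in> carrier_mat (N*N) (N*N)" "invertible_mat P" "P * ?Do = ?Ds * P"
      unfolding equiv_rep_def by auto
    obtain Pi where Pi: "Pi \<in> carrier_mat (N*N) (N*N)" "P * Pi = 1\<^sub>m (N*N)" "Pi * P = 1\<^sub>m (N*N)"
      using invertible_obtain[OF P(2,1)] .
    have iDo: "invertible_mat ?Do" using cyc n1 n2 unfolding cyclic_rep_def by simp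
    obtain Bd where Bd: "Bd \<in> carrier_mat (N*N) (N*N)" "?Do * Bd = 1\<^sub>m (N*N)" "Bd * ?Do = 1\<^sub>m (N*N)"
      using invertible_obtain[OF iDo Do] .
    have DsN: "?Ds ^\<^sub>m N = 0 \<cdot>\<^sub>m 1\<^sub>m (N*N)" using Dt_pow[OF N a2, of a1 y1 y2] s0 by simp
    have PD: "P * ?Do ^\<^sub>m N = ?Ds ^\<^sub>m N * P" by (rule pow_mat_intertw[OF P(1) Do Ds P(3)])
    let ?e = "unit_vec (N*N) 0 :: complex vec"
    have NN: "0 < N * N" using N by simp
    have ec: "?e \<in> carrier_vec (N*N)" by simp
    have DoNc: "?Do ^\<^sub>m N \<in> carrier_mat (N*N) (N*N)" using Do by simp
    have "P *\<^sub>v (?Do ^\<^sub>m N *\<^sub>v ?e) = (P * ?Do ^\<^sub>m N) *\<^sub>v ?e" using assoc_mult_mat_vec[OF P(1) DoNc ec] by simp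
    also have "\<dots> = (0 \<cdot>\<^sub>m 1\<^sub>m (N*N) * P) *\<^sub>v ?e" unfolding PD DsN ..
    also have "0 \<cdot>\<^sub>m 1\<^sub>m (N*N) * P = 0 \<cdot>\<^sub>m (1\<^sub>m (N*N) * P)" by (rule mult_smult_assoc_mat[OF one_carrier_mat P(1)])
    also have "(0 \<cdot>\<^sub>m (1\<^sub>m (N*N) * P)) *\<^sub>v ?e = 0 \<cdot>\<^sub>v ((1\<^sub>m (N*N) * P) *\<^sub>v ?e)"
      by (rule smult_mat_mult_vec[OF mult_carrier_mat[OF one_carrier_mat P(1)] ec])
    also have "\<dots> = 0\<^sub>v (N*N)" using P(1) by (auto simp: vec_eq_iff)
    finally have "P *\<^sub>v (?Do ^\<^sub>m N *\<^sub>v ?e) = 0\<^sub>v (N*N)" .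
    then have "Pi *\<^sub>v (P *\<^sub>v (?Do ^\<^sub>m N *\<^sub>v ?e)) = 0\<^sub>v (N*N)" using mult_mat_vec_zero[OF Pi(1)] by simp
    moreover have "Pi *\<^sub>v (P *\<^sub>v (?Do ^\<^sub>m N *\<^sub>v ?e)) = ?Do ^\<^sub>m N *\<^sub>v ?e"
      using assoc_mult_mat_vec[OF Pi(1) P(1) mult_mat_vec_carrier[OF DoNc ec]] Pi(3)
        mult_mat_vec_carrier[OF DoNc ec] by simp
    ultimately have "?Do ^\<^sub>m N *\<^sub>v ?e = 0\<^sub>v (N*N)" by simp
    then have "?e = 0\<^sub>v (N*N)" using pow_inj[OF Do Bd(1) Bd(3) ec] by blast
    then have "?e $ 0 = (0\<^sub>v (N*N) :: complex vec) $ 0" by simp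
    then show False using NN by simp
  qed
  have st: "equiv_rep (N*N) (diag_copies N (std_E N (a1*a2) ?y)) (diag_copies N (std_D N (a1*a2) ?y)) (N*N) ?Es ?Ds"
    by (rule std_tensor_equiv[OF N a1 a2 y yN])
  have st': "equiv_rep (N*N) ?Es ?Ds (N*N) (diag_copies N (std_E N (a1*a2) ?y)) (diag_copies N (std_D N (a1*a2) ?y))"
    by (rule equiv_sym[OF _ _ Es Ds st]) simp_all
  have "equiv_rep (N*N) ?Eo ?Do (N*N) (diag_copies N (std_E N (a1*a2) ?y)) (diag_copies N (std_D N (a1*a2) ?y))"
    by (rule equiv_trans[OF Eo Do Es Ds _ _ tr st']) simp_all
  then show ?thesis using n1 n2 by simp
qed

theorem proposition2p4:
  fixes N :: nat
  assumes "odd N" and "N \<ge> 3"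
  shows
    "(\<forall>a y. a \<noteq> 0 \<longrightarrow> y \<noteq> 0 \<longrightarrow>
        irreducible_rep N N (std_E N a y) (std_D N a y)
        \<and> cyclic_rep N N (std_E N a y) (std_D N a y))
   \<and> (\<forall>a1 y1 a2 y2. a1 \<noteq> 0 \<longrightarrow> y1 \<noteq> 0 \<longrightarrow> a2 \<noteq> 0 \<longrightarrow> y2 \<noteq> 0 \<longrightarrow>
        (equiv_rep N (std_E N a1 y1) (std_D N a1 y1) N (std_E N a2 y2) (std_D N a2 y2)
         \<longleftrightarrow> a1 ^ (2 * N) = a2 ^ (2 * N) \<and> a1 ^ N * y1 ^ N = a2 ^ N * y2 ^ N))
   \<and> (\<forall>n E D. irreducible_rep N n E D \<longrightarrow> cyclic_rep N n E D \<longrightarrow>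
        (\<exists>a y. a \<noteq> 0 \<and> y \<noteq> 0 \<and> equiv_rep n E D N (std_E N a y) (std_D N a y)))
   \<and> (\<forall>root :: complex \<Rightarrow> complex. (\<forall>u. root u ^ N = u) \<longrightarrow>
        (\<forall>n1 E1 D1 n2 E2 D2 a1 y1 a2 y2.
          irreducible_rep N n1 E1 D1 \<longrightarrow> cyclic_rep N n1 E1 D1 \<longrightarrow>
          irreducible_rep N n2 E2 D2 \<longrightarrow> cyclic_rep N n2 E2 D2 \<longrightarrow>
          cyclic_rep N (n1 * n2) (tensor_E E1 E2) (tensor_D E1 D1 E2 D2) \<longrightarrow>
          a1 \<noteq> 0 \<longrightarrow> y1 \<noteq> 0 \<longrightarrow> a2 \<noteq> 0 \<longrightarrow> y2 \<noteq> 0 \<longrightarrow>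
          equiv_rep n1 E1 D1 N (std_E N a1 y1) (std_D N a1 y1) \<longrightarrow>
          equiv_rep n2 E2 D2 N (std_E N a2 y2) (std_D N a2 y2) \<longrightarrow>
          (let a = a1 * a2; y = root (a1 ^ N * y2 ^ N + y1 ^ N / a2 ^ N) in
            equiv_rep (n1 * n2) (tensor_E E1 E2) (tensor_D E1 D1 E2 D2)
              (N * N) (diag_copies N (std_E N a y)) (diag_copies N (std_D N a y)))))"
proof -
  have N: "N > 0" using assms(2) by simp
  show ?thesis
  proof (intro conjI allI impI)
    fix a y :: complex assume "a \<noteq> 0" "y \<noteq> 0"
    then show "irreducible_rep N N (std_E N a y) (std_D N a y)" using std_irreducible[OF N] by simp
  next
    fix a y :: complex assume "a \<noteq> 0" "y \<noteq> 0"
    then show "cyclic_rep N N (std_E N a y) (std_D N a y)" using std_cyclic_rep[OF N] by simp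
  next
    fix a1 y1 a2 y2 :: complex assume "a1 \<noteq> 0" "y1 \<noteq> 0" "a2 \<noteq> 0" "y2 \<noteq> 0"
    then show "equiv_rep N (std_E N a1 y1) (std_D N a1 y1) N (std_E N a2 y2) (std_D N a2 y2) \<longleftrightarrow>
         a1 ^ (2 * N) = a2 ^ (2 * N) \<and> a1 ^ N * y1 ^ N = a2 ^ N * y2 ^ N"
      using std_equiv_iff[OF N] by simp
  next
    fix n E D assume "irreducible_rep N n E D" "cyclic_rep N n E D"
    then show "\<exists>a y. a \<noteq> 0 \<and> y \<noteq> 0 \<and> equiv_rep n E D N (std_E N a y) (std_D N a y)"
      using classify[OF N] by blast
  next
    fix rt :: "complex \<Rightarrow> complex" and n1 E1 D1 n2 E2 D2 a1 y1 a2 y2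
    assume "\<forall>u. rt u ^ N = u" "irreducible_rep N n1 E1 D1" "cyclic_rep N n1 E1 D1"
      "irreducible_rep N n2 E2 D2" "cyclic_rep N n2 E2 D2"
      "cyclic_rep N (n1 * n2) (tensor_E E1 E2) (tensor_D E1 D1 E2 D2)"
      "a1 \<noteq> 0" "y1 \<noteq> 0" "a2 \<noteq> 0" "y2 \<noteq> 0"
      "equiv_rep n1 E1 D1 N (std_E N a1 y1) (std_D N a1 y1)"
      "equiv_rep n2 E2 D2 N (std_E N a2 y2) (std_D N a2 y2)"
    then show "let a = a1 * a2; y = rt (a1 ^ N * y2 ^ N + y1 ^ N / a2 ^ N) in
            equiv_rep (n1 * n2) (tensor_E E1 E2) (tensor_D E1 D1 E2 D2)
              (N * N) (diag_copies N (std_E N a y)) (diag_copies N (std_D N a y))"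
      unfolding Let_def using part3[OF N] by blast
  qed
qed

end
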